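(* Let $A$ be a finite set of formulas over the signature of the theory of extensional constant arrays, all of whose literals are flat. If some derivation of the calculus CAEXT starting from the initial configuration $\langle A, \mathcal{I}_0, \pi_0\rangle$ ends in the configuration $\mathsf{unsat}$, then $A$ is unsatisfiable in the theory of extensional constant arrays, i.e. no interpretation satisfying the axioms (row-eq), (row-ne), (ext), (roc) satisfies $A$.
   Context: Theory. Many-sorted first-order logic with equality. There is an index sort $\sigma$, an element sort $\tau$, and an array sort $(\sigma\to\tau)$, with function symbols: read $a[i]$ of type $(\sigma\to\tau)\times\sigma\to\tau$, write $a\langle i\triangleleft u\rangle$ of type $(\sigma\to\tau)\times\sigma\times\tau\to(\sigma\to\tau)$, and constant array $\langle v\rangle$ of type $\tau\to(\sigma\to\tau)$ (no restriction on whether $\sigma$ is finite or infinite). The theory of extensional constant arrays consists of all interpretations satisfying: (row-eq) $\forall a,i,j,u.\ i\approx j\Rightarrow a\langle i\triangleleft u\rangle[j]\approx u$; (row-ne) $\forall a,i,j,u.\ i\not\approx j\Rightarrow a\langle i\triangleleft u\rangle[j]\approx a[j]$; (ext) $\forall a,b.\ a\approx b\Leftrightarrow \forall i.\ a[i]\approx b[i]$; (roc) $\forall i,v.\ \langle v\rangle[i]\approx v$. The empty theory treats all these symbols (and the array sort) as uninterpreted. A literal is flat if it is $\bot$, $p(x_1,\dots,x_n)$, $\neg p(x_1,\dots,x_n)$, $x\approx y$, $x\not\approx y$, or $x\approx f(x_1,\dots,x_n)$ with $x,y,x_i$ uninterpreted constants; array disequalities are written $\neg(a\approx c)$. $T(A)$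 is the set of terms occurring in $A$, and $T_{\mathcal A}(A)$ the set of array terms in $A$. Let $W(A)=\{a\langle i\triangleleft u\rangle[i]\approx u \mid a\langle i\triangleleft u\rangle\in T(A)\}$. Configurations. A configuration is either $\mathsf{unsat}$ or a triple $\langle A,\mathcal I,\pi\rangle$ where $A$ is a set of formulas, $\mathcal I$ is either the special value $\mathcal I_0=\mathsf{none}$ or an interpretation in the empty theory satisfying $A$, and $\pi$ is a map sending pairs $(a,t)$, with $a$ an array term and $t$ either a read term $b[i]$ or a constant array term $\langle v\rangle$, to either the undefined value $()$ or a pair $(r,c)$ with $r$ a formula and $c$ an array term. $\pi_0$ maps every pair to $()$. The initial configuration for $A$ is $\langle A,\mathcal I_0,\pi_0\rangle$. Reasons. For a configuration, $\mathcal R(a,t)$ is defined recursively: $\mathcal R(a,t)=()$ if $\pi(a,t)=()$; otherwise $\mathcal R(a,t)=\top$ if $t=a$ or $t=a[i]$ for some $i$; otherwise $\mathcal R(a,t)=\mathcal R(c,t)\wedge r$ where $\pi(a,t)=(r,c)$. Updated indices: $I(a,\langle v\rangle)=()$ if $\pi(a,\langle v\rangle)=()$; $I(a,\langle v\rangle)=\emptyset$ if $a=\langle v\rangle$; $I(a,\langle v\rangle)=I(b,\langle v\rangle)\cup\{j\}$ if $\pi(a,\langle v\rangle)=(\top,b)$ with $b=a\langle j\triangleleft u\rangle$ or $a=b\langle j\triangleleft u\rangle$ for some $u$; otherwise $I(a,\langle v\rangle)=I(c,\langle v\rangle)$ where $\pi(a,\langle v\rangle)=(r,c)$. "$\mathcal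 I\models\varphi$" refers to the current interpretation $\mathcal I$ (evaluated in the empty theory); rules with such a premise apply only when $\mathcal I\neq\mathcal I_0$. "Reset" means setting $(\mathcal I,\pi):=(\mathcal I_0,\pi_0)$. Rules of CAEXT (each modifies the current configuration $\langle A,\mathcal I,\pi\rangle$): Interp: if $\mathcal I=\mathcal I_0$ and $\mathcal I'$ is an empty-theory interpretation with $\mathcal I'\models A\cup W(A)$, set $\mathcal I:=\mathcal I'$. Conf: if $A\cup W(A)$ is unsatisfiable in the empty theory, derive $\mathsf{unsat}$. InitR: if $a[i]\in T(A)$, set $\pi(a,a[i]):=(\top,a)$. InitW: if $s=a\langle i\triangleleft u\rangle\in T(A)$, set $\pi(s,s[i]):=(\top,s)$. RowD: if $\mathcal I\models i\not\approx j$, $\pi(a\langle j\triangleleft u\rangle,b[i])\ne()$ and $\pi(a,b[i])=()$, set $\pi(a,b[i]):=(i\not\approx j,\ a\langle j\triangleleft u\rangle)$. RowU: if $\mathcal I\models i\not\approx j$, $a\langle j\triangleleft u\rangle\in T(A)$, $\pi(a,b[i])\ne()$ and $\pi(a\langle j\triangleleft u\rangle,b[i])=()$, set $\pi(a\langle j\triangleleft u\rangle,b[i]):=(i\not\approx j,\ a)$. EqR: if $\mathcal I\models a\approx c$, $a,c\in T_{\mathcal A}(A)$, $a\approx c\in T(A)$, $\pi(a,b[i])\ne()$, $\pi(c,b[i])=()$, set $\pi(c,b[i]):=(a\approx c,a)$. EqL: same premises with roles swapped ($\pi(c,b[i])\ne()$, $\pi(a,b[i])=()$), set $\pi(a,b[i]):=(a\approx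 c,c)$. CongR: if $\mathcal I\models i\approx k$, $\pi(a,b[i])\ne()$, $\pi(a,c[k])\ne()$, $\mathcal I\models b[i]\not\approx c[k]$, add $\mathcal R(a,b[i])\wedge\mathcal R(a,c[k])\wedge i\approx k\Rightarrow b[i]\approx c[k]$ to $A$ and reset. DisEq: if $\mathcal I\models a\not\approx c$, $a,c\in T_{\mathcal A}(A)$, $a\approx c\in T(A)$, and the index constant $k_{\{a,c\}}\notin T(A)$, add $a\not\approx c\Rightarrow a[k_{\{a,c\}}]\not\approx c[k_{\{a,c\}}]$ to $A$ (with $k_{\{a,c\}}$ a fresh index constant associated with the pair) and reset. Roc: if $\pi(\langle v\rangle,b[i])\ne()$ and $\mathcal I\models b[i]\not\approx v$, add $\mathcal R(\langle v\rangle,b[i])\Rightarrow b[i]\approx v$ to $A$ and reset. InitC: if $\langle v\rangle\in T(A)$, set $\pi(\langle v\rangle,\langle v\rangle):=(\top,\langle v\rangle)$. CowD: if $\pi(a\langle j\triangleleft u\rangle,\langle v\rangle)\ne()$, $\pi(a,\langle v\rangle)=()$ and $\mathcal I\models\exists i{:}\sigma.\bigwedge_{k\in I(a\langle j\triangleleft u\rangle,\langle v\rangle)\cup\{j\}} i\not\approx k$, set $\pi(a,\langle v\rangle):=(\top,a\langle j\triangleleft u\rangle)$. CowU: if $\pi(a,\langle v\rangle)\ne()$, $\pi(a\langle j\triangleleft u\rangle,\langle v\rangle)=()$, $a\langle j\triangleleft u\rangle\in T(A)$ and $\mathcal I\models\exists i{:}\sigma.\bigwedge_{k\in I(a,\langle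 v\rangle)\cup\{j\}} i\not\approx k$, set $\pi(a\langle j\triangleleft u\rangle,\langle v\rangle):=(\top,a)$. CEqR: if $\mathcal I\models a\approx c$, $a,c\in T_{\mathcal A}(A)$, $a\approx c\in T(A)$, $\pi(a,\langle v\rangle)\ne()$, $\pi(c,\langle v\rangle)=()$, set $\pi(c,\langle v\rangle):=(a\approx c,a)$. CEqL: same with roles swapped, set $\pi(a,\langle v\rangle):=(a\approx c,c)$. CongC: if $\pi(a,\langle v\rangle)\ne()$, $\pi(a,\langle w\rangle)\ne()$, $\mathcal I\models v\not\approx w$ and $\mathcal I\models\exists i{:}\sigma.\bigwedge_{k\in I(a,\langle v\rangle)\cup I(a,\langle w\rangle)} i\not\approx k$, add $\mathcal R(a,\langle v\rangle)\wedge\mathcal R(a,\langle w\rangle)\wedge\exists i{:}\sigma.\bigwedge_{k\in I(a,\langle v\rangle)\cup I(a,\langle w\rangle)} i\not\approx k\Rightarrow v\approx w$ to $A$ and reset. Conflict rules are CongR, DisEq, Roc, CongC. Whenever a rule introduces non-flat literals, they are flattened with fresh constants. A derivation is a sequence of configurations, starting from an initial one, each obtained from the previous by a rule application. *)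

theory Defs
  imports Main
begin

section \<open>Syntax\<close>

text \<open>Sorts: index sort sigma, element sort tau, array sort (sigma -> tau).\<close>
datatype sort = SIdx | SElem | SArr

text \<open>Constant names: ordinary names, and the designated index constants
  k_{a,c} introduced by the DisEq rule (associated with a pair of array terms).
  Terms: uninterpreted constants, variables (only used under the existential
  quantifier introduced by CongC), read a[i], write a<i <| u>, constant array <v>.\<close>
datatype name = Nm nat | Kc trm trm
  and trm = Cst name sort | Var nat sort | Rd trm trm | Wr trm trm trm | CA trm

datatype fm = FTop | FBot | FEq trm trm | FNot fm | FAnd fm fm | FOr fm fm
  | FImp fm fm | FEx nat sort fm

fun sort_of :: "trm \<Rightarrow> sort" where
  "sort_of (Cst _ s) = s"
| "sort_of (Var _ s) = s"
| "sort_of (Rd _ _) = SElem"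
| "sort_of (Wr _ _ _) = SArr"
| "sort_of (CA _) = SArr"

fun wst :: "trm \<Rightarrow> bool" where
  "wst (Cst _ _) = True"
| "wst (Var _ _) = True"
| "wst (Rd a i) = (wst a \<and> wst i \<and> sort_of a = SArr \<and> sort_of i = SIdx)"
| "wst (Wr a i u) = (wst a \<and> wst i \<and> wst u \<and> sort_of a = SArr \<and> sort_of i = SIdx
                     \<and> sort_of u = SElem)"
| "wst (CA v) = (wst v \<and> sort_of v = SElem)"

fun wf_fm :: "fm \<Rightarrow> bool" where
  "wf_fm FTop = True"
| "wf_fm FBot = True"
| "wf_fm (FEq s t) = (wst s \<and> wst t \<and> sort_of s = sort_of t)"
| "wf_fm (FNot p) = wf_fm p"
| "wf_fm (FAnd p q) = (wf_fm p \<and> wf_fm q)"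
| "wf_fm (FOr p q) = (wf_fm p \<and> wf_fm q)"
| "wf_fm (FImp p q) = (wf_fm p \<and> wf_fm q)"
| "wf_fm (FEx _ _ p) = wf_fm p"

fun subt :: "trm \<Rightarrow> trm set" where
  "subt (Cst n s) = {Cst n s}"
| "subt (Var x s) = {Var x s}"
| "subt (Rd a i) = insert (Rd a i) (subt a \<union> subt i)"
| "subt (Wr a i u) = insert (Wr a i u) (subt a \<union> subt i \<union> subt u)"
| "subt (CA v) = insert (CA v) (subt v)"

fun tvars :: "trm \<Rightarrow> (nat \<times> sort) set" where
  "tvars (Cst _ _) = {}"
| "tvars (Var x s) = {(x, s)}"
| "tvars (Rd a i) = tvars a \<union> tvars i"
| "tvars (Wr a i u) = tvars a \<union> tvars i \<union> tvars u"
| "tvars (CA v) = tvars v"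

definition ground :: "trm \<Rightarrow> bool" where
  "ground t \<longleftrightarrow> tvars t = {}"

fun fvars :: "fm \<Rightarrow> (nat \<times> sort) set" where
  "fvars FTop = {}"
| "fvars FBot = {}"
| "fvars (FEq s t) = tvars s \<union> tvars t"
| "fvars (FNot p) = fvars p"
| "fvars (FAnd p q) = fvars p \<union> fvars q"
| "fvars (FOr p q) = fvars p \<union> fvars q"
| "fvars (FImp p q) = fvars p \<union> fvars q"
| "fvars (FEx x s p) = fvars p - {(x, s)}"

definition closed :: "fm \<Rightarrow> bool" where
  "closed p \<longleftrightarrow> fvars p = {}"

fun fterms :: "fm \<Rightarrow> trm set" where
  "fterms FTop = {}"
| "fterms FBot = {}"
| "fterms (FEq s t) = subt s \<union> subt t"
| "fterms (FNot p) = fterms p"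
| "fterms (FAnd p q) = fterms p \<union> fterms q"
| "fterms (FOr p q) = fterms p \<union> fterms q"
| "fterms (FImp p q) = fterms p \<union> fterms q"
| "fterms (FEx _ _ p) = fterms p"

definition T :: "fm set \<Rightarrow> trm set" where
  "T A = (\<Union>p\<in>A. fterms p)"

definition TA :: "fm set \<Rightarrow> trm set" where
  "TA A = {t \<in> T A. sort_of t = SArr}"

text \<open>Equality atoms occurring in a formula / set of formulas (for "a = c in T(A)").\<close>
fun fatoms :: "fm \<Rightarrow> (trm \<times> trm) set" where
  "fatoms FTop = {}"
| "fatoms FBot = {}"
| "fatoms (FEq s t) = {(s, t)}"
| "fatoms (FNot p) = fatoms p"
| "fatoms (FAnd p q) = fatoms p \<union> fatoms q"
| "fatoms (FOr p q) = fatoms p \<union> fatoms q"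
| "fatoms (FImp p q) = fatoms p \<union> fatoms q"
| "fatoms (FEx _ _ p) = fatoms p"

definition atoms :: "fm set \<Rightarrow> (trm \<times> trm) set" where
  "atoms A = (\<Union>p\<in>A. fatoms p)"

definition W :: "fm set \<Rightarrow> fm set" where
  "W A = {FEq (Rd (Wr a i u) i) u | a i u. Wr a i u \<in> T A}"

section \<open>Flat literals and flattening\<close>

text \<open>Uninterpreted constants (and, for the bound index variable of CongC, variables).\<close>
fun atomic :: "trm \<Rightarrow> bool" where
  "atomic (Cst _ _) = True"
| "atomic (Var _ _) = True"
| "atomic _ = False"

fun app_atomic :: "trm \<Rightarrow> bool" where
  "app_atomic (Rd a i) = (atomic a \<and> atomic i)"
| "app_atomic (Wr a i u) = (atomic a \<and> atomic i \<and> atomic u)"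
| "app_atomic (CA v) = atomic v"
| "app_atomic _ = False"

text \<open>Flat literals: bottom, x = y, x ~= y, x = f(x1,...,xn).  Negative literals are
  FNot applied to an atom; the truth constant FTop (used in reasons) is harmless.\<close>
fun flat_fm :: "fm \<Rightarrow> bool" where
  "flat_fm FTop = True"
| "flat_fm FBot = True"
| "flat_fm (FEq s t) = (atomic s \<and> (atomic t \<or> app_atomic t))"
| "flat_fm (FNot (FEq s t)) = (atomic s \<and> atomic t)"
| "flat_fm (FNot FBot) = True"
| "flat_fm (FNot FTop) = True"
| "flat_fm (FNot p) = flat_fm p"
| "flat_fm (FAnd p q) = (flat_fm p \<and> flat_fm q)"
| "flat_fm (FOr p q) = (flat_fm p \<and> flat_fm q)"
| "flat_fm (FImp p q) = (flat_fm p \<and> flat_fm q)"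
| "flat_fm (FEx _ _ p) = flat_fm p"

fun nonflat_terms :: "fm \<Rightarrow> trm set" where
  "nonflat_terms FTop = {}"
| "nonflat_terms FBot = {}"
| "nonflat_terms (FEq s t) =
     (if atomic s \<and> (atomic t \<or> app_atomic t) then {} else subt s \<union> subt t)"
| "nonflat_terms (FNot (FEq s t)) =
     (if atomic s \<and> atomic t then {} else subt s \<union> subt t)"
| "nonflat_terms (FNot FBot) = {}"
| "nonflat_terms (FNot FTop) = {}"
| "nonflat_terms (FNot p) = nonflat_terms p"
| "nonflat_terms (FAnd p q) = nonflat_terms p \<union> nonflat_terms q"
| "nonflat_terms (FOr p q) = nonflat_terms p \<union> nonflat_terms q"
| "nonflat_terms (FImp p q) = nonflat_terms p \<union> nonflat_terms q"
| "nonflat_terms (FEx _ _ p) = nonflat_terms p"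

fun rept :: "trm \<Rightarrow> trm \<Rightarrow> trm \<Rightarrow> trm" where
  "rept t c s = (if s = t then c else
     (case s of Rd a i \<Rightarrow> Rd (rept t c a) (rept t c i)
      | Wr a i u \<Rightarrow> Wr (rept t c a) (rept t c i) (rept t c u)
      | CA v \<Rightarrow> CA (rept t c v)
      | _ \<Rightarrow> s))"

fun repf :: "trm \<Rightarrow> trm \<Rightarrow> fm \<Rightarrow> fm" where
  "repf t c FTop = FTop"
| "repf t c FBot = FBot"
| "repf t c (FEq s u) = FEq (rept t c s) (rept t c u)"
| "repf t c (FNot p) = FNot (repf t c p)"
| "repf t c (FAnd p q) = FAnd (repf t c p) (repf t c q)"
| "repf t c (FOr p q) = FOr (repf t c p) (repf t c q)"
| "repf t c (FImp p q) = FImp (repf t c p) (repf t c q)"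
| "repf t c (FEx x s p) = FEx x s (repf t c p)"

definition flat_step :: "fm set \<Rightarrow> fm set \<Rightarrow> fm set \<Rightarrow> bool" where
  "flat_step A S S' \<longleftrightarrow>
     (\<exists>p\<in>S. \<exists>t n. t \<in> nonflat_terms p \<and> \<not> atomic t \<and> ground t \<and>
        Cst (Nm n) (sort_of t) \<notin> T (A \<union> S) \<and>
        S' = (S - {p}) \<union> {repf t (Cst (Nm n) (sort_of t)) p, FEq (Cst (Nm n) (sort_of t)) t})"

definition flattening :: "fm set \<Rightarrow> fm \<Rightarrow> fm set \<Rightarrow> bool" where
  "flattening A p S \<longleftrightarrow> (flat_step A)\<^sup>*\<^sup>* {p} S \<and> (\<forall>q\<in>S. flat_fm q)"

definition add_fm :: "fm set \<Rightarrow> fm \<Rightarrow> fm set \<Rightarrow> bool" where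
  "add_fm A p A' \<longleftrightarrow> (\<exists>S. flattening A p S \<and> A' = A \<union> S)"

section \<open>Semantics\<close>

text \<open>A many-sorted interpretation: a carrier for each sort (inside the universe 'u),
  interpretations of the constants and of read, write and constant-array.\<close>
record 'u interp =
  dm :: "sort \<Rightarrow> 'u set"
  cst :: "name \<Rightarrow> sort \<Rightarrow> 'u"
  rd :: "'u \<Rightarrow> 'u \<Rightarrow> 'u"
  wr :: "'u \<Rightarrow> 'u \<Rightarrow> 'u \<Rightarrow> 'u"
  ca :: "'u \<Rightarrow> 'u"

text \<open>Interpretations of the empty theory (all symbols uninterpreted).\<close>
definition is_interp :: "'u interp \<Rightarrow> bool" where
  "is_interp I \<longleftrightarrow>
     (\<forall>s. dm I s \<noteq> {}) \<and> (\<forall>n s. cst I n s \<in> dm I s) \<and>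
     (\<forall>a\<in>dm I SArr. \<forall>i\<in>dm I SIdx. rd I a i \<in> dm I SElem) \<and>
     (\<forall>a\<in>dm I SArr. \<forall>i\<in>dm I SIdx. \<forall>u\<in>dm I SElem. wr I a i u \<in> dm I SArr) \<and>
     (\<forall>v\<in>dm I SElem. ca I v \<in> dm I SArr)"

text \<open>Interpretations of the theory of extensional constant arrays:
  axioms (row-eq), (row-ne), (ext), (roc).\<close>
definition array_interp :: "'u interp \<Rightarrow> bool" where
  "array_interp I \<longleftrightarrow> is_interp I \<and>
     (\<forall>a\<in>dm I SArr. \<forall>i\<in>dm I SIdx. \<forall>j\<in>dm I SIdx. \<forall>u\<in>dm I SElem.
        i = j \<longrightarrow> rd I (wr I a i u) j = u) \<and>
     (\<forall>a\<in>dm I SArr. \<forall>i\<in>dm I SIdx. \<forall>j\<in>dm I SIdx. \<forall>u\<in>dm I SElem.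
        i \<noteq> j \<longrightarrow> rd I (wr I a i u) j = rd I a j) \<and>
     (\<forall>a\<in>dm I SArr. \<forall>b\<in>dm I SArr. a = b \<longleftrightarrow> (\<forall>i\<in>dm I SIdx. rd I a i = rd I b i)) \<and>
     (\<forall>i\<in>dm I SIdx. \<forall>v\<in>dm I SElem. rd I (ca I v) i = v)"

fun eval :: "'u interp \<Rightarrow> (nat \<times> sort \<Rightarrow> 'u) \<Rightarrow> trm \<Rightarrow> 'u" where
  "eval I \<nu> (Cst n s) = cst I n s"
| "eval I \<nu> (Var x s) = \<nu> (x, s)"
| "eval I \<nu> (Rd a i) = rd I (eval I \<nu> a) (eval I \<nu> i)"
| "eval I \<nu> (Wr a i u) = wr I (eval I \<nu> a) (eval I \<nu> i) (eval I \<nu> u)"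
| "eval I \<nu> (CA v) = ca I (eval I \<nu> v)"

fun sat :: "'u interp \<Rightarrow> (nat \<times> sort \<Rightarrow> 'u) \<Rightarrow> fm \<Rightarrow> bool" where
  "sat I \<nu> FTop = True"
| "sat I \<nu> FBot = False"
| "sat I \<nu> (FEq s t) = (eval I \<nu> s = eval I \<nu> t)"
| "sat I \<nu> (FNot p) = (\<not> sat I \<nu> p)"
| "sat I \<nu> (FAnd p q) = (sat I \<nu> p \<and> sat I \<nu> q)"
| "sat I \<nu> (FOr p q) = (sat I \<nu> p \<or> sat I \<nu> q)"
| "sat I \<nu> (FImp p q) = (sat I \<nu> p \<longrightarrow> sat I \<nu> q)"
| "sat I \<nu> (FEx x s p) = (\<exists>d\<in>dm I s. sat I (\<nu>((x, s) := d)) p)"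

definition holds :: "'u interp \<Rightarrow> fm \<Rightarrow> bool" where
  "holds I p \<longleftrightarrow> sat I (\<lambda>(x, s). SOME d. d \<in> dm I s) p"

definition models :: "'u interp \<Rightarrow> fm set \<Rightarrow> bool" where
  "models I A \<longleftrightarrow> is_interp I \<and> (\<forall>p\<in>A. holds I p)"

section \<open>The calculus CAEXT\<close>

type_synonym pimap = "trm \<times> trm \<Rightarrow> (fm \<times> trm) option"

datatype 'u cfg = Unsat | Cfg "fm set" "'u interp option" pimap

definition pi0 :: pimap where "pi0 = (\<lambda>_. None)"

definition init_cfg :: "fm set \<Rightarrow> 'u cfg" where
  "init_cfg A = Cfg A None pi0"

text \<open>Reasons R(a,t): the relation "reason pi a t r" holds iff R(a,t) = r (R(a,t) defined).\<close>
inductive reason :: "pimap \<Rightarrow> trm \<Rightarrow> trm \<Rightarrow> fm \<Rightarrow> bool" for \<pi> where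
  rbase: "\<pi> (a, t) \<noteq> None \<Longrightarrow> (t = a \<or> (\<exists>i. t = Rd a i)) \<Longrightarrow> reason \<pi> a t FTop"
| rstep: "\<pi> (a, t) = Some (r, c) \<Longrightarrow> \<not> (t = a \<or> (\<exists>i. t = Rd a i)) \<Longrightarrow>
          reason \<pi> c t p \<Longrightarrow> reason \<pi> a t (FAnd p r)"

text \<open>Updated indices I(a,<v>): "updidx pi a t K" holds iff I(a,t) = K (defined).\<close>
inductive updidx :: "pimap \<Rightarrow> trm \<Rightarrow> trm \<Rightarrow> trm set \<Rightarrow> bool" for \<pi> where
  ubase: "\<pi> (a, t) \<noteq> None \<Longrightarrow> a = t \<Longrightarrow> updidx \<pi> a t {}"
| uwr: "\<pi> (a, t) = Some (FTop, b) \<Longrightarrow> a \<noteq> t \<Longrightarrow>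
        (\<exists>u. b = Wr a j u \<or> a = Wr b j u) \<Longrightarrow>
        updidx \<pi> b t K \<Longrightarrow> updidx \<pi> a t (insert j K)"
| uoth: "\<pi> (a, t) = Some (r, c) \<Longrightarrow> a \<noteq> t \<Longrightarrow>
        \<not> (r = FTop \<and> (\<exists>j u. c = Wr a j u \<or> a = Wr c j u)) \<Longrightarrow>
        updidx \<pi> c t K \<Longrightarrow> updidx \<pi> a t K"

definition conjs :: "fm list \<Rightarrow> fm" where
  "conjs ps = foldr FAnd ps FTop"

definition ex_avoid :: "'u interp \<Rightarrow> trm set \<Rightarrow> bool" where
  "ex_avoid J K \<longleftrightarrow>
     (\<exists>d\<in>dm J SIdx. \<forall>k\<in>K. d \<noteq> eval J (\<lambda>(x, s). SOME e. e \<in> dm J s) k)"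

inductive step :: "'u cfg \<Rightarrow> 'u cfg \<Rightarrow> bool" where
  Interp: "models (J :: 'u interp) (A \<union> W A) \<Longrightarrow> step (Cfg A None \<pi>) (Cfg A (Some J) \<pi>)"
| Conf: "\<not> (\<exists>J :: 'u interp. models J (A \<union> W A)) \<Longrightarrow> step (Cfg A I \<pi>) Unsat"
| InitR: "Rd a i \<in> T A \<Longrightarrow> step (Cfg A I \<pi>) (Cfg A I (\<pi>((a, Rd a i) := Some (FTop, a))))"
| InitW: "Wr a i u \<in> T A \<Longrightarrow>
          step (Cfg A I \<pi>) (Cfg A I (\<pi>((Wr a i u, Rd (Wr a i u) i) := Some (FTop, Wr a i u))))"
| RowD: "holds J (FNot (FEq i j)) \<Longrightarrow> \<pi> (Wr a j u, Rd b i) \<noteq> None \<Longrightarrow> \<pi> (a, Rd b i) = None \<Longrightarrow>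
         step (Cfg A (Some J) \<pi>)
              (Cfg A (Some J) (\<pi>((a, Rd b i) := Some (FNot (FEq i j), Wr a j u))))"
| RowU: "holds J (FNot (FEq i j)) \<Longrightarrow> Wr a j u \<in> T A \<Longrightarrow> \<pi> (a, Rd b i) \<noteq> None \<Longrightarrow>
         \<pi> (Wr a j u, Rd b i) = None \<Longrightarrow>
         step (Cfg A (Some J) \<pi>)
              (Cfg A (Some J) (\<pi>((Wr a j u, Rd b i) := Some (FNot (FEq i j), a))))"
| EqR: "holds J (FEq a c) \<Longrightarrow> a \<in> TA A \<Longrightarrow> c \<in> TA A \<Longrightarrow> (a, c) \<in> atoms A \<Longrightarrow>
        \<pi> (a, Rd b i) \<noteq> None \<Longrightarrow> \<pi> (c, Rd b i) = None \<Longrightarrow>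
        step (Cfg A (Some J) \<pi>) (Cfg A (Some J) (\<pi>((c, Rd b i) := Some (FEq a c, a))))"
| EqL: "holds J (FEq a c) \<Longrightarrow> a \<in> TA A \<Longrightarrow> c \<in> TA A \<Longrightarrow> (a, c) \<in> atoms A \<Longrightarrow>
        \<pi> (c, Rd b i) \<noteq> None \<Longrightarrow> \<pi> (a, Rd b i) = None \<Longrightarrow>
        step (Cfg A (Some J) \<pi>) (Cfg A (Some J) (\<pi>((a, Rd b i) := Some (FEq a c, c))))"
| CongR: "holds J (FEq i k) \<Longrightarrow> \<pi> (a, Rd b i) \<noteq> None \<Longrightarrow> \<pi> (a, Rd c k) \<noteq> None \<Longrightarrow>
          holds J (FNot (FEq (Rd b i) (Rd c k))) \<Longrightarrow>
          reason \<pi> a (Rd b i) r1 \<Longrightarrow> reason \<pi> a (Rd c k) r2 \<Longrightarrow>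
          add_fm A (FImp (FAnd r1 (FAnd r2 (FEq i k))) (FEq (Rd b i) (Rd c k))) A' \<Longrightarrow>
          step (Cfg A (Some J) \<pi>) (Cfg A' None pi0)"
| DisEq: "holds J (FNot (FEq a c)) \<Longrightarrow> a \<in> TA A \<Longrightarrow> c \<in> TA A \<Longrightarrow> (a, c) \<in> atoms A \<Longrightarrow>
          Cst (Kc a c) SIdx \<notin> T A \<Longrightarrow> Cst (Kc c a) SIdx \<notin> T A \<Longrightarrow>
          add_fm A (FImp (FNot (FEq a c))
                     (FNot (FEq (Rd a (Cst (Kc a c) SIdx)) (Rd c (Cst (Kc a c) SIdx))))) A' \<Longrightarrow>
          step (Cfg A (Some J) \<pi>) (Cfg A' None pi0)"
| Roc: "\<pi> (CA v, Rd b i) \<noteq> None \<Longrightarrow> holds J (FNot (FEq (Rd b i) v)) \<Longrightarrow>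
        reason \<pi> (CA v) (Rd b i) r \<Longrightarrow>
        add_fm A (FImp r (FEq (Rd b i) v)) A' \<Longrightarrow>
        step (Cfg A (Some J) \<pi>) (Cfg A' None pi0)"
| InitC: "CA v \<in> T A \<Longrightarrow> step (Cfg A I \<pi>) (Cfg A I (\<pi>((CA v, CA v) := Some (FTop, CA v))))"
| CowD: "\<pi> (Wr a j u, CA v) \<noteq> None \<Longrightarrow> \<pi> (a, CA v) = None \<Longrightarrow>
         updidx \<pi> (Wr a j u) (CA v) K \<Longrightarrow> ex_avoid J (insert j K) \<Longrightarrow>
         step (Cfg A (Some J) \<pi>) (Cfg A (Some J) (\<pi>((a, CA v) := Some (FTop, Wr a j u))))"
| CowU: "\<pi> (a, CA v) \<noteq> None \<Longrightarrow> \<pi> (Wr a j u, CA v) = None \<Longrightarrow> Wr a j u \<in> T A \<Longrightarrow>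
         updidx \<pi> a (CA v) K \<Longrightarrow> ex_avoid J (insert j K) \<Longrightarrow>
         step (Cfg A (Some J) \<pi>) (Cfg A (Some J) (\<pi>((Wr a j u, CA v) := Some (FTop, a))))"
| CEqR: "holds J (FEq a c) \<Longrightarrow> a \<in> TA A \<Longrightarrow> c \<in> TA A \<Longrightarrow> (a, c) \<in> atoms A \<Longrightarrow>
         \<pi> (a, CA v) \<noteq> None \<Longrightarrow> \<pi> (c, CA v) = None \<Longrightarrow>
         step (Cfg A (Some J) \<pi>) (Cfg A (Some J) (\<pi>((c, CA v) := Some (FEq a c, a))))"
| CEqL: "holds J (FEq a c) \<Longrightarrow> a \<in> TA A \<Longrightarrow> c \<in> TA A \<Longrightarrow> (a, c) \<in> atoms A \<Longrightarrow>
         \<pi> (c, CA v) \<noteq> None \<Longrightarrow> \<pi> (a, CA v) = None \<Longrightarrow>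
         step (Cfg A (Some J) \<pi>) (Cfg A (Some J) (\<pi>((a, CA v) := Some (FEq a c, c))))"
| CongC: "\<pi> (a, CA v) \<noteq> None \<Longrightarrow> \<pi> (a, CA w) \<noteq> None \<Longrightarrow> holds J (FNot (FEq v w)) \<Longrightarrow>
          updidx \<pi> a (CA v) K1 \<Longrightarrow> updidx \<pi> a (CA w) K2 \<Longrightarrow> ex_avoid J (K1 \<union> K2) \<Longrightarrow>
          reason \<pi> a (CA v) r1 \<Longrightarrow> reason \<pi> a (CA w) r2 \<Longrightarrow>
          set ks = K1 \<union> K2 \<Longrightarrow> (\<forall>k\<in>set ks. (x, SIdx) \<notin> tvars k) \<Longrightarrow>
          add_fm A (FImp (FAnd r1 (FAnd r2
                      (FEx x SIdx (conjs (map (\<lambda>k. FNot (FEq (Var x SIdx) k)) ks)))))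
                    (FEq v w)) A' \<Longrightarrow>
          step (Cfg A (Some J) \<pi>) (Cfg A' None pi0)"

end

theory Submission
  imports Defs "HOL-Library.Countable_Set" "HOL-Library.FuncSet"
begin


lemma trm_induct[case_names Cst Var Rd Wr CA]:
  assumes "\<And>n s. P (Cst n s)" "\<And>x s. P (Var x s)" "\<And>a i. P a \<Longrightarrow> P i \<Longrightarrow> P (Rd a i)"
    "\<And>a i u. P a \<Longrightarrow> P i \<Longrightarrow> P u \<Longrightarrow> P (Wr a i u)" "\<And>v. P v \<Longrightarrow> P (CA v)"
  shows "P t"
  apply (rule trm.induct[of "\<lambda>_. True" P])
  using assms by auto

lemma subt_refl[simp]: "t \<in> subt t"
  by (cases t) auto

lemma subt_trans: "u \<in> subt t \<Longrightarrow> subt u \<subseteq> subt t"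
  by (induction t rule: trm_induct) auto

lemma wst_subt: "wst t \<Longrightarrow> u \<in> subt t \<Longrightarrow> wst u"
  by (induction t rule: trm_induct) auto

lemma fterms_subt: "u \<in> fterms p \<Longrightarrow> subt u \<subseteq> fterms p"
  by (induction p) (auto dest: subt_trans)

lemma wf_fterms: "wf_fm p \<Longrightarrow> u \<in> fterms p \<Longrightarrow> wst u"
  by (induction p) (auto dest: wst_subt)

lemma T_subt: "u \<in> T A \<Longrightarrow> subt u \<subseteq> T A"
  unfolding T_def by (auto dest: fterms_subt)

lemma wfA_T: "\<forall>p\<in>A. wf_fm p \<Longrightarrow> u \<in> T A \<Longrightarrow> wst u"
  unfolding T_def by (auto dest: wf_fterms)

lemma nonflat_sub: "nonflat_terms p \<subseteq> fterms p"
  by (induction p rule: nonflat_terms.induct) auto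

lemma eval_agree: "(\<forall>v\<in>tvars t. \<mu> v = \<mu>' v) \<Longrightarrow> eval I \<mu> t = eval I \<mu>' t"
  by (induction t rule: trm_induct) auto

lemma sat_agree: "(\<forall>v\<in>fvars p. \<mu> v = \<mu>' v) \<Longrightarrow> sat I \<mu> p = sat I \<mu>' p"
proof (induction p arbitrary: \<mu> \<mu>')
  case (FEq s t)
  then show ?case using eval_agree[of s \<mu> \<mu>' I] eval_agree[of t \<mu> \<mu>' I] by auto
next
  case (FEx x s p)
  have "\<And>d. sat I (\<mu>((x, s) := d)) p = sat I (\<mu>'((x, s) := d)) p"
    by (rule FEx.IH) (use FEx.prems in auto)
  then show ?case by simp
next
  case (FNot p) then show ?case by simp
next
  case (FAnd p q)
  have "sat I \<mu> p = sat I \<mu>' p" by (rule FAnd.IH) (use FAnd.prems in auto)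
  moreover have "sat I \<mu> q = sat I \<mu>' q" by (rule FAnd.IH) (use FAnd.prems in auto)
  ultimately show ?case by simp
next
  case (FOr p q)
  have "sat I \<mu> p = sat I \<mu>' p" by (rule FOr.IH) (use FOr.prems in auto)
  moreover have "sat I \<mu> q = sat I \<mu>' q" by (rule FOr.IH) (use FOr.prems in auto)
  ultimately show ?case by simp
next
  case (FImp p q)
  have "sat I \<mu> p = sat I \<mu>' p" by (rule FImp.IH) (use FImp.prems in auto)
  moreover have "sat I \<mu> q = sat I \<mu>' q" by (rule FImp.IH) (use FImp.prems in auto)
  ultimately show ?case by simp
qed auto

lemma eval_dom: "is_interp I \<Longrightarrow> (\<forall>v. \<mu> v \<in> dm I (snd v)) \<Longrightarrow> wst t \<Longrightarrow>
   eval I \<mu> t \<in> dm I (sort_of t)"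
  by (induction t rule: trm_induct) (auto simp: is_interp_def)

definition dv :: "'u interp \<Rightarrow> nat \<times> sort \<Rightarrow> 'u" where
  "dv I = (\<lambda>(x, s). SOME d. d \<in> dm I s)"

lemma holds_dv: "holds I p = sat I (dv I) p"
  by (simp add: holds_def dv_def)

lemma dv_dom: "is_interp I \<Longrightarrow> dv I v \<in> dm I (snd v)"
  unfolding dv_def is_interp_def by (cases v) (auto simp: some_in_eq)

lemma ev_dom: "is_interp I \<Longrightarrow> wst t \<Longrightarrow> eval I (dv I) t \<in> dm I (sort_of t)"
  using eval_dom dv_dom by blast

definition upd_cst :: "'u interp \<Rightarrow> name \<Rightarrow> sort \<Rightarrow> 'u \<Rightarrow> 'u interp" where
  "upd_cst I n s d = I\<lparr>cst := (\<lambda>m s'. if m = n \<and> s' = s then d else cst I m s')\<rparr>"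

lemma upd_cst_simps[simp]: "dm (upd_cst I n s d) = dm I" "rd (upd_cst I n s d) = rd I"
  "wr (upd_cst I n s d) = wr I" "ca (upd_cst I n s d) = ca I"
  "cst (upd_cst I n s d) m s' = (if m = n \<and> s' = s then d else cst I m s')"
  by (auto simp: upd_cst_def)

lemma eval_upd: "Cst n s \<notin> subt t \<Longrightarrow> eval (upd_cst I n s d) \<mu> t = eval I \<mu> t"
  by (induction t rule: trm_induct) auto

lemma sat_upd: "Cst n s \<notin> fterms p \<Longrightarrow> sat (upd_cst I n s d) \<mu> p = sat I \<mu> p"
  by (induction p arbitrary: \<mu>) (auto simp: eval_upd)

lemma dv_upd[simp]: "dv (upd_cst I n s d) = dv I"
  by (simp add: dv_def)

lemma holds_upd: "Cst n s \<notin> fterms p \<Longrightarrow> holds (upd_cst I n s d) p = holds I p"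
  by (simp add: holds_dv sat_upd)

lemma is_interp_upd: "is_interp I \<Longrightarrow> d \<in> dm I s \<Longrightarrow> is_interp (upd_cst I n s d)"
  by (auto simp: is_interp_def)

lemma array_interp_upd: "array_interp I \<Longrightarrow> d \<in> dm I s \<Longrightarrow> array_interp (upd_cst I n s d)"
  unfolding array_interp_def using is_interp_upd by auto

declare rept.simps[simp del]

lemma rept_Rd: "rept t c (Rd a i) = (if Rd a i = t then c else Rd (rept t c a) (rept t c i))"
  by (subst rept.simps) auto
lemma rept_Wr: "rept t c (Wr a i u) = (if Wr a i u = t then c else Wr (rept t c a) (rept t c i) (rept t c u))"
  by (subst rept.simps) auto
lemma rept_CA: "rept t c (CA v) = (if CA v = t then c else CA (rept t c v))"
  by (subst rept.simps) auto
lemma rept_Cst: "rept t c (Cst n s) = (if Cst n s = t then c else Cst n s)"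
  by (subst rept.simps) auto
lemma rept_Var: "rept t c (Var n s) = (if Var n s = t then c else Var n s)"
  by (subst rept.simps) auto
lemmas rept_simps = rept_Rd rept_Wr rept_CA rept_Cst rept_Var

lemma rept_sort: "sort_of c = sort_of t \<Longrightarrow> sort_of (rept t c u) = sort_of u"
  by (cases u) (auto simp: rept_simps)

lemma rept_wst: "sort_of c = sort_of t \<Longrightarrow> wst c \<Longrightarrow> wst u \<Longrightarrow> wst (rept t c u)"
  by (induction u rule: trm_induct) (auto simp: rept_simps rept_sort)

lemma rept_eval: "eval I \<mu> c = eval I \<mu> t \<Longrightarrow> eval I \<mu> (rept t c u) = eval I \<mu> u"
  by (induction u rule: trm_induct) (auto simp: rept_simps)

lemma repf_wf: "sort_of c = sort_of t \<Longrightarrow> wst c \<Longrightarrow> wf_fm p \<Longrightarrow> wf_fm (repf t c p)"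
  by (induction p) (auto simp: rept_wst rept_sort)

lemma repf_sat: "(\<forall>\<mu>. eval I \<mu> c = eval I \<mu> t) \<Longrightarrow> sat I \<mu> (repf t c p) = sat I \<mu> p"
  by (induction p arbitrary: \<mu>) (auto simp: rept_eval)



lemma flat_sound:
  assumes "(flat_step A)\<^sup>*\<^sup>* S0 S" "\<forall>q\<in>S0. wf_fm q" "array_interp (M::'v interp)"
    "\<forall>q\<in>A \<union> S0. holds M q"
  shows "(\<forall>q\<in>S. wf_fm q) \<and> (\<exists>M'::'v interp. array_interp M' \<and> (\<forall>q\<in>A \<union> S. holds M' q))"
  using assms(1)
proof (induction rule: rtranclp_induct)
  case base
  then show ?case using assms by blast
next
  case (step S S')
  from step.IH obtain M' :: "'v interp" where wfS: "\<forall>q\<in>S. wf_fm q" and M': "array_interp M'"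
    "\<forall>q\<in>A \<union> S. holds M' q" by blast
  from step.hyps(2) obtain p t n where p: "p \<in> S" and t: "t \<in> nonflat_terms p" "ground t"
    and fresh: "Cst (Nm n) (sort_of t) \<notin> T (A \<union> S)"
    and S': "S' = (S - {p}) \<union> {repf t (Cst (Nm n) (sort_of t)) p, FEq (Cst (Nm n) (sort_of t)) t}"
    unfolding flat_step_def by blast
  define c where "c = Cst (Nm n) (sort_of t)"
  have tp: "t \<in> fterms p" using t nonflat_sub by blast
  have wst: "wst t" using wf_fterms[OF _ tp] wfS p by blast
  have isI: "is_interp M'" using M' array_interp_def by blast
  define d where "d = eval M' (dv M') t"
  have d: "d \<in> dm M' (sort_of t)" unfolding d_def using ev_dom[OF isI wst] .
  define M'' where "M'' = upd_cst M' (Nm n) (sort_of t) d"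
  have M'': "array_interp M''" unfolding M''_def using array_interp_upd[OF M'(1) d] .
  have cnot: "\<And>q. q \<in> A \<union> S \<Longrightarrow> Cst (Nm n) (sort_of t) \<notin> fterms q"
    using fresh unfolding T_def by blast
  have cnt: "Cst (Nm n) (sort_of t) \<notin> subt t" using cnot[of p] p fterms_subt[OF tp] by blast
  have evt: "\<And>\<mu>. eval M'' \<mu> t = d"
  proof -
    fix \<mu>
    have "eval M'' \<mu> t = eval M' \<mu> t" unfolding M''_def using eval_upd[OF cnt] .
    also have "\<dots> = eval M' (dv M') t" using t(2) eval_agree unfolding ground_def by blast
    finally show "eval M'' \<mu> t = d" unfolding d_def .
  qed
  have evc: "\<And>\<mu>. eval M'' \<mu> c = d" unfolding c_def M''_def by simp
  have cp: "Cst (Nm n) (sort_of t) \<notin> fterms p" using cnot p by blast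
  have "holds M'' p = holds M' p" unfolding M''_def by (rule holds_upd[OF cp])
  then have hp: "holds M'' p" using M'(2) p by auto
  have h1: "holds M'' (repf t c p)" using hp repf_sat[of M'' c t] evt evc unfolding holds_dv by simp
  have h2: "holds M'' (FEq c t)" using evt evc unfolding holds_dv by simp
  have h3: "\<forall>q\<in>A \<union> (S - {p}). holds M'' q"
  proof
    fix q assume "q \<in> A \<union> (S - {p})"
    then have q: "q \<in> A \<union> S" by blast
    have "holds M'' q = holds M' q" unfolding M''_def by (rule holds_upd[OF cnot[OF q]])
    then show "holds M'' q" using M'(2) q by blast
  qed
  have wf1: "wf_fm (repf t c p)" using repf_wf[of c t p] wfS p unfolding c_def by simp
  have wf2: "wf_fm (FEq c t)" using wst unfolding c_def by simp
  show ?case using S' wfS wf1 wf2 M'' h1 h2 h3 unfolding c_def[symmetric] by blast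
qed

lemma add_fm_sound:
  assumes "add_fm A p A'" "\<forall>q\<in>A. wf_fm q" "wf_fm p" "array_interp (M::'v interp)"
    "\<forall>q\<in>A. holds M q" "holds M p"
  shows "(\<forall>q\<in>A'. wf_fm q) \<and> (\<exists>M'::'v interp. array_interp M' \<and> (\<forall>q\<in>A'. holds M' q))"
proof -
  from assms(1) obtain S where S: "(flat_step A)\<^sup>*\<^sup>* {p} S" "A' = A \<union> S"
    unfolding add_fm_def flattening_def by blast
  have "(\<forall>q\<in>S. wf_fm q) \<and> (\<exists>M'::'v interp. array_interp M' \<and> (\<forall>q\<in>A \<union> S. holds M' q))"
    by (rule flat_sound[OF S(1) _ assms(4)]) (use assms in auto)
  then show ?thesis using S assms(2) by auto
qed



instance sort :: countable by countable_datatype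
instance name :: countable by countable_datatype
instance trm :: countable by countable_datatype
instance fm :: countable by countable_datatype

lemma countable_PiE':
  "finite I \<Longrightarrow> (\<And>i. i \<in> I \<Longrightarrow> countable (F i)) \<Longrightarrow> countable (Pi\<^sub>E I F)"
  by (induct I arbitrary: F rule: finite_induct) (auto simp: PiE_insert_eq)

lemma finite_tvars: "finite (tvars t)"
  by (induction t rule: trm_induct) auto

lemma finite_fvars: "finite (fvars p)"
  by (induction p) (auto simp: finite_tvars)

definition nu0 :: "'v interp \<Rightarrow> sort \<Rightarrow> 'v" where
  "nu0 M s = (SOME d. d \<in> dm M s)"

lemma dv_nu0: "dv M v = nu0 M (snd v)"
  by (cases v) (simp add: dv_def nu0_def)

definition extv :: "'v interp \<Rightarrow> (nat \<times> sort) set \<Rightarrow> (nat \<times> sort \<Rightarrow> 'v) \<Rightarrow> nat \<times> sort \<Rightarrow> 'v" where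
  "extv M F f = (\<lambda>v. if v \<in> F then f v else nu0 M (snd v))"

definition wcond :: "'v interp \<Rightarrow> fm \<Rightarrow> nat \<Rightarrow> sort \<Rightarrow> (nat \<times> sort \<Rightarrow> 'v) \<Rightarrow> 'v \<Rightarrow> bool" where
  "wcond M p x s f d \<longleftrightarrow> d \<in> dm M s \<and> sat M ((extv M (fvars (FEx x s p)) f)((x, s) := d)) p"

definition wit :: "'v interp \<Rightarrow> fm \<Rightarrow> nat \<Rightarrow> sort \<Rightarrow> (nat \<times> sort \<Rightarrow> 'v) \<Rightarrow> 'v" where
  "wit M p x s f = (SOME d. wcond M p x s f d)"

definition witset :: "'v interp \<Rightarrow> (sort \<times> 'v) set \<Rightarrow> fm \<Rightarrow> nat \<Rightarrow> sort \<Rightarrow> (sort \<times> 'v) set" where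
  "witset M X p x s = (\<lambda>f. (s, wit M p x s f)) `
     {f \<in> Pi\<^sub>E (fvars (FEx x s p)) (\<lambda>v. {e. (snd v, e) \<in> X}). \<exists>d. wcond M p x s f d}"

definition stepD :: "'v interp \<Rightarrow> (sort \<times> 'v) set \<Rightarrow> (sort \<times> 'v) set" where
  "stepD M X = X
     \<union> (\<lambda>(a, i). (SElem, rd M (snd a) (snd i))) ` {(a, i). a \<in> X \<and> i \<in> X \<and> fst a = SArr \<and> fst i = SIdx}
     \<union> (\<lambda>(a, i, u). (SArr, wr M (snd a) (snd i) (snd u))) `
         {(a, i, u). a \<in> X \<and> i \<in> X \<and> u \<in> X \<and> fst a = SArr \<and> fst i = SIdx \<and> fst u = SElem}
     \<union> (\<lambda>v. (SArr, ca M (snd v))) ` {v \<in> X. fst v = SElem}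
     \<union> (\<Union>(p, x, s). witset M X p x s)"

definition baseD :: "'v interp \<Rightarrow> (sort \<times> 'v) set" where
  "baseD M = range (\<lambda>s. (s, nu0 M s)) \<union> range (\<lambda>(n, s). (s, cst M n s))"

definition Dn :: "'v interp \<Rightarrow> nat \<Rightarrow> (sort \<times> 'v) set" where
  "Dn M n = (stepD M ^^ n) (baseD M)"

definition DD :: "'v interp \<Rightarrow> (sort \<times> 'v) set" where
  "DD M = (\<Union>n. Dn M n)"

lemma countable_stepD: "countable X \<Longrightarrow> countable (stepD M X)"
proof -
  assume X: "countable X"
  have c1: "countable {(a, i). a \<in> X \<and> i \<in> X \<and> fst a = SArr \<and> fst i = SIdx}"
    by (rule countable_subset[of _ "X \<times> X"]) (auto intro: X)
  have c2: "countable {(a, i, u). a \<in> X \<and> i \<in> X \<and> u \<in> X \<and> fst a = SArr \<and> fst i = SIdx \<and> fst u = SElem}"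
    by (rule countable_subset[of _ "X \<times> X \<times> X"]) (auto intro: X)
  have c3: "countable {v \<in> X. fst v = SElem}" using X by auto
  have c4: "countable (witset M X p x s)" for p x s
  proof -
    have "countable (Pi\<^sub>E (fvars (FEx x s p)) (\<lambda>v. {e. (snd v, e) \<in> X}))"
    proof (rule countable_PiE')
      show "finite (fvars (FEx x s p))" by (rule finite_fvars)
      fix v
      have "{e. (snd v, e) \<in> X} \<subseteq> snd ` X" by force
      then show "countable {e. (snd v, e) \<in> X}" using X countable_subset by blast
    qed
    then show ?thesis unfolding witset_def by auto
  qed
  have c5: "countable (\<Union>(p, x, s). witset M X p x s)"
    by (rule countable_UN) (auto intro: c4)
  show ?thesis unfolding stepD_def using X c1 c2 c3 c5 by auto
qed

lemma countable_Dn: "countable (Dn M n)"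
proof (induction n)
  case 0
  have "countable (range (\<lambda>s::sort. (s, nu0 M s)))" by auto
  moreover have "countable (range (\<lambda>(n::name, s::sort). (s, cst M n s)))" by auto
  ultimately show ?case by (simp add: Dn_def baseD_def)
next
  case (Suc n)
  then show ?case by (simp add: Dn_def countable_stepD)
qed

lemma countable_DD: "countable (DD M)"
  unfolding DD_def by (auto intro: countable_Dn)


lemma Dn_Suc: "Dn M (Suc n) = stepD M (Dn M n)"
  by (simp add: Dn_def)

lemma Dn_mono: "m \<le> n \<Longrightarrow> Dn M m \<subseteq> Dn M n"
  by (rule lift_Suc_mono_le[of "Dn M"]) (auto simp: Dn_Suc stepD_def)

lemma Dn_DD: "z \<in> Dn M n \<Longrightarrow> z \<in> DD M"
  unfolding DD_def by blast

lemma DD_fin: "finite F \<Longrightarrow> F \<subseteq> DD M \<Longrightarrow> \<exists>n. F \<subseteq> Dn M n"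
proof (induction F rule: finite_induct)
  case empty
  then show ?case by auto
next
  case (insert z F)
  then obtain n where n: "F \<subseteq> Dn M n" by auto
  from insert obtain m where m: "z \<in> Dn M m" unfolding DD_def by auto
  have "F \<subseteq> Dn M (max n m)" using n Dn_mono[of n "max n m" M] by auto
  moreover have "z \<in> Dn M (max n m)" using m Dn_mono[of m "max n m" M] by auto
  ultimately show ?case by blast
qed

lemma wit_prop: "\<exists>d. wcond M p x s f d \<Longrightarrow> wcond M p x s f (wit M p x s f)"
  unfolding wit_def by (rule someI_ex)

lemma stepD_dom:
  assumes I: "is_interp M" and X: "\<And>s e. (s, e) \<in> X \<Longrightarrow> e \<in> dm M s"
    and z: "z \<in> stepD M X"
  shows "snd z \<in> dm M (fst z)"
proof -
  have XX: "\<And>y. y \<in> X \<Longrightarrow> snd y \<in> dm M (fst y)" using X by (metis prod.collapse)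
  from z consider (a) "z \<in> X"
    | (b) "z \<in> (\<lambda>(a, i). (SElem, rd M (snd a) (snd i))) ` {(a, i). a \<in> X \<and> i \<in> X \<and> fst a = SArr \<and> fst i = SIdx}"
    | (c) "z \<in> (\<lambda>(a, i, u). (SArr, wr M (snd a) (snd i) (snd u))) `
         {(a, i, u). a \<in> X \<and> i \<in> X \<and> u \<in> X \<and> fst a = SArr \<and> fst i = SIdx \<and> fst u = SElem}"
    | (d) "z \<in> (\<lambda>v. (SArr, ca M (snd v))) ` {v \<in> X. fst v = SElem}"
    | (e) "z \<in> (\<Union>(p, x, s). witset M X p x s)"
    unfolding stepD_def by blast
  then show ?thesis
  proof cases
    case a then show ?thesis using XX by blast
  next
    case b
    then obtain a i where "z = (SElem, rd M (snd a) (snd i))" "a \<in> X" "i \<in> X" "fst a = SArr" "fst i = SIdx"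
      by auto
    then show ?thesis using I XX[of a] XX[of i] unfolding is_interp_def by auto
  next
    case c
    then obtain a i u where "z = (SArr, wr M (snd a) (snd i) (snd u))" "a \<in> X" "i \<in> X" "u \<in> X"
      "fst a = SArr" "fst i = SIdx" "fst u = SElem"
      by auto
    then show ?thesis using I XX[of a] XX[of i] XX[of u] unfolding is_interp_def by auto
  next
    case d
    then obtain v where "z = (SArr, ca M (snd v))" "v \<in> X" "fst v = SElem"
      by blast
    then show ?thesis using I XX[of v] unfolding is_interp_def by auto
  next
    case e
    then obtain p x s f where "z = (s, wit M p x s f)" "\<exists>d. wcond M p x s f d"
      unfolding witset_def by blast
    then show ?thesis using wit_prop[of M p x s f] unfolding wcond_def by auto
  qed
qed

lemma Dn_dom: "is_interp M \<Longrightarrow> (s, e) \<in> Dn M n \<Longrightarrow> e \<in> dm M s"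
proof (induction n arbitrary: s e)
  case 0
  then show ?case by (auto simp: Dn_def baseD_def nu0_def is_interp_def some_in_eq)
next
  case (Suc n)
  show ?case using stepD_dom[of M "Dn M n" "(s, e)"] Suc unfolding Dn_Suc by auto
qed

lemma DD_dom: "is_interp M \<Longrightarrow> (s, e) \<in> DD M \<Longrightarrow> e \<in> dm M s"
  unfolding DD_def using Dn_dom by fastforce

lemma DD_base1: "(s, nu0 M s) \<in> DD M"
  by (rule Dn_DD[of _ _ 0]) (simp add: Dn_def baseD_def)

lemma DD_base2: "(s, cst M n s) \<in> DD M"
proof (rule Dn_DD[of _ _ 0])
  have "(s, cst M n s) \<in> range (\<lambda>(n, s). (s, cst M n s))" by (rule image_eqI[where x="(n, s)"]) auto
  then show "(s, cst M n s) \<in> Dn M 0" by (simp add: Dn_def baseD_def)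
qed

lemma DD_rd: "(SArr, a) \<in> DD M \<Longrightarrow> (SIdx, i) \<in> DD M \<Longrightarrow> (SElem, rd M a i) \<in> DD M"
proof -
  assume "(SArr, a) \<in> DD M" "(SIdx, i) \<in> DD M"
  then obtain n where "{(SArr, a), (SIdx, i)} \<subseteq> Dn M n" using DD_fin[of "{(SArr, a), (SIdx, i)}" M] by auto
  then have "(SElem, rd M a i) \<in> (\<lambda>(a, i). (SElem, rd M (snd a) (snd i))) ` {(a, i). a \<in> Dn M n \<and> i \<in> Dn M n \<and> fst a = SArr \<and> fst i = SIdx}"
    by (intro image_eqI[where x="((SArr, a), (SIdx, i))"]) auto
  then have "(SElem, rd M a i) \<in> Dn M (Suc n)" unfolding Dn_Suc stepD_def by blast
  then show ?thesis by (rule Dn_DD)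
qed

lemma DD_wr: "(SArr, a) \<in> DD M \<Longrightarrow> (SIdx, i) \<in> DD M \<Longrightarrow> (SElem, u) \<in> DD M \<Longrightarrow>
  (SArr, wr M a i u) \<in> DD M"
proof -
  assume "(SArr, a) \<in> DD M" "(SIdx, i) \<in> DD M" "(SElem, u) \<in> DD M"
  then obtain n where "{(SArr, a), (SIdx, i), (SElem, u)} \<subseteq> Dn M n"
    using DD_fin[of "{(SArr, a), (SIdx, i), (SElem, u)}" M] by auto
  then have "(SArr, wr M a i u) \<in> (\<lambda>(a, i, u). (SArr, wr M (snd a) (snd i) (snd u))) `
         {(a, i, u). a \<in> Dn M n \<and> i \<in> Dn M n \<and> u \<in> Dn M n \<and> fst a = SArr \<and> fst i = SIdx \<and> fst u = SElem}"
    by (intro image_eqI[where x="((SArr, a), (SIdx, i), (SElem, u))"]) auto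
  then have "(SArr, wr M a i u) \<in> Dn M (Suc n)" unfolding Dn_Suc stepD_def by blast
  then show ?thesis by (rule Dn_DD)
qed

lemma DD_ca: "(SElem, v) \<in> DD M \<Longrightarrow> (SArr, ca M v) \<in> DD M"
proof -
  assume "(SElem, v) \<in> DD M"
  then obtain n where "(SElem, v) \<in> Dn M n" unfolding DD_def by auto
  then have "(SArr, ca M v) \<in> (\<lambda>v. (SArr, ca M (snd v))) ` {v \<in> Dn M n. fst v = SElem}"
    by (intro image_eqI[where x="(SElem, v)"]) auto
  then have "(SArr, ca M v) \<in> Dn M (Suc n)" unfolding Dn_Suc stepD_def by blast
  then show ?thesis by (rule Dn_DD)
qed

lemma DD_wit:
  assumes mu: "\<forall>v. (snd v, \<mu> v) \<in> DD M" and sat: "sat M \<mu> (FEx x s p)"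
  shows "\<exists>e. (s, e) \<in> DD M \<and> sat M (\<mu>((x, s) := e)) p"
proof -
  define F where "F = fvars (FEx x s p)"
  have "(\<lambda>v. (snd v, \<mu> v)) ` F \<subseteq> DD M" using mu by auto
  then obtain n where n: "(\<lambda>v. (snd v, \<mu> v)) ` F \<subseteq> Dn M n"
    using DD_fin[of "(\<lambda>v. (snd v, \<mu> v)) ` F" M] finite_fvars unfolding F_def by blast
  define f where "f = restrict \<mu> F"
  have fP: "f \<in> Pi\<^sub>E F (\<lambda>v. {e. (snd v, e) \<in> Dn M n})" using n unfolding f_def by auto
  have agree: "\<And>d. sat M ((extv M F f)((x, s) := d)) p = sat M (\<mu>((x, s) := d)) p"
    by (rule sat_agree) (auto simp: extv_def f_def F_def)
  from sat obtain d where "d \<in> dm M s" "sat M (\<mu>((x, s) := d)) p" by auto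
  then have ex: "\<exists>d. wcond M p x s f d" unfolding wcond_def F_def[symmetric] using agree by auto
  define w where "w = wit M p x s f"
  have wc: "wcond M p x s f w" using wit_prop[OF ex] unfolding w_def .
  have "(s, w) \<in> witset M (Dn M n) p x s" unfolding witset_def w_def using fP ex F_def by auto
  then have "(s, w) \<in> Dn M (Suc n)" unfolding Dn_Suc stepD_def by blast
  moreover have "sat M (\<mu>((x, s) := w)) p" using wc agree unfolding wcond_def F_def[symmetric] by auto
  ultimately show ?thesis using Dn_DD by blast
qed



lemma inj_exists:
  assumes "countable D" "infinite (UNIV :: 'u set)"
  shows "\<exists>h :: 'a \<Rightarrow> 'u. inj_on h D"
proof -
  have "\<exists>f::nat \<Rightarrow> 'u. inj f \<and> range f \<subseteq> UNIV" using assms(2) by (simp only: infinite_iff_countable_subset)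
  then obtain g :: "nat \<Rightarrow> 'u" where g: "inj g" by blast
  have "inj_on (g \<circ> to_nat_on D) D"
    by (rule comp_inj_on[OF inj_on_to_nat_on[OF assms(1)]]) (rule inj_on_subset[OF g subset_UNIV])
  then show ?thesis by blast
qed

lemma adjust:
  fixes h :: "sort \<times> 'v \<Rightarrow> 'u"
  assumes inj: "inj_on h D" and nu: "\<And>s. (s, \<nu> s) \<in> D"
  shows "\<exists>h' :: sort \<times> 'v \<Rightarrow> 'u. inj_on h' D \<and>
     (\<forall>s. (\<lambda>e. h' (s, e)) ` {e. (s, e) \<in> D} = (\<lambda>e. h (s, e)) ` {e. (s, e) \<in> D}) \<and>
     (\<forall>s. h' (s, \<nu> s) = (SOME y. y \<in> (\<lambda>e. h (s, e)) ` {e. (s, e) \<in> D}))"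
proof -
  define \<sigma> where "\<sigma> s = (SOME y. y \<in> (\<lambda>e. h (s, e)) ` {e. (s, e) \<in> D})" for s
  have \<sigma>in: "\<sigma> s \<in> (\<lambda>e. h (s, e)) ` {e. (s, e) \<in> D}" for s
    unfolding \<sigma>_def some_in_eq using nu[of s] by blast
  define es where "es s = (SOME e. (s, e) \<in> D \<and> h (s, e) = \<sigma> s)" for s
  have es: "(s, es s) \<in> D \<and> h (s, es s) = \<sigma> s" for s
  proof -
    from \<sigma>in[of s] obtain e where "(s, e) \<in> D \<and> h (s, e) = \<sigma> s" by auto
    then show ?thesis unfolding es_def by (rule someI)
  qed
  define \<tau> where "\<tau> z = (fst z, if snd z = \<nu> (fst z) then es (fst z) else if snd z = es (fst z) then \<nu> (fst z) else snd z)" for z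
  have invol: "\<tau> (\<tau> z) = z" for z unfolding \<tau>_def by (cases z) auto
  have \<tau>D: "z \<in> D \<Longrightarrow> \<tau> z \<in> D" for z unfolding \<tau>_def using es nu by (cases z) auto
  have \<tau>inj: "inj_on \<tau> D" by (metis inj_onI invol)
  define h' where "h' = h \<circ> \<tau>"
  have "inj_on h' D" unfolding h'_def
    by (rule comp_inj_on[OF \<tau>inj]) (rule inj_on_subset[OF inj], use \<tau>D in auto)
  moreover have "(\<lambda>e. h' (s, e)) ` {e. (s, e) \<in> D} = (\<lambda>e. h (s, e)) ` {e. (s, e) \<in> D}" for s
  proof
    show "(\<lambda>e. h' (s, e)) ` {e. (s, e) \<in> D} \<subseteq> (\<lambda>e. h (s, e)) ` {e. (s, e) \<in> D}"
    proof
      fix y assume "y \<in> (\<lambda>e. h' (s, e)) ` {e. (s, e) \<in> D}"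
      then obtain e where e: "(s, e) \<in> D" "y = h (\<tau> (s, e))" unfolding h'_def by auto
      have "fst (\<tau> (s, e)) = s" unfolding \<tau>_def by simp
      then have "\<tau> (s, e) = (s, snd (\<tau> (s, e)))" by (metis prod.collapse)
      then show "y \<in> (\<lambda>e. h (s, e)) ` {e. (s, e) \<in> D}" using e \<tau>D[OF e(1)] by (metis (mono_tags, lifting) image_eqI mem_Collect_eq)
    qed
  next
    show "(\<lambda>e. h (s, e)) ` {e. (s, e) \<in> D} \<subseteq> (\<lambda>e. h' (s, e)) ` {e. (s, e) \<in> D}"
    proof
      fix y assume "y \<in> (\<lambda>e. h (s, e)) ` {e. (s, e) \<in> D}"
      then obtain e where e: "(s, e) \<in> D" "y = h (s, e)" by auto
      have "fst (\<tau> (s, e)) = s" unfolding \<tau>_def by simp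
      then have t: "\<tau> (s, e) = (s, snd (\<tau> (s, e)))" by (metis prod.collapse)
      have "y = h' (\<tau> (s, e))" unfolding h'_def using e invol by simp
      then show "y \<in> (\<lambda>e. h' (s, e)) ` {e. (s, e) \<in> D}" using t \<tau>D[OF e(1)]
        by (metis (mono_tags, lifting) image_eqI mem_Collect_eq)
    qed
  qed
  moreover have "h' (s, \<nu> s) = \<sigma> s" for s unfolding h'_def \<tau>_def using es by simp
  ultimately show ?thesis unfolding \<sigma>_def by blast
qed



lemma LS:
  fixes M :: "'v interp"
  assumes I: "is_interp M" and inf: "infinite (UNIV :: 'u set)"
  shows "\<exists>N :: 'u interp. is_interp N \<and> (\<forall>p. wf_fm p \<longrightarrow> holds N p = holds M p)"
proof -
  define D where "D = DD M"
  obtain h0 :: "sort \<times> 'v \<Rightarrow> 'u" where h0: "inj_on h0 D"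
    using inj_exists[OF countable_DD inf] unfolding D_def by blast
  obtain hh :: "sort \<times> 'v \<Rightarrow> 'u" where inj: "inj_on hh D"
    and img: "\<forall>s. (\<lambda>e. hh (s, e)) ` {e. (s, e) \<in> D} = (\<lambda>e. h0 (s, e)) ` {e. (s, e) \<in> D}"
    and dflt: "\<forall>s. hh (s, nu0 M s) = (SOME y. y \<in> (\<lambda>e. h0 (s, e)) ` {e. (s, e) \<in> D})"
    using adjust[OF h0, of "nu0 M"] DD_base1 unfolding D_def by blast
  define hinv where "hinv s y = (SOME e. (s, e) \<in> D \<and> hh (s, e) = y)" for s y
  have hinv: "hinv s (hh (s, e)) = e" if "(s, e) \<in> D" for s e
  proof -
    have "(s, hinv s (hh (s, e))) \<in> D \<and> hh (s, hinv s (hh (s, e))) = hh (s, e)"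
      unfolding hinv_def by (rule someI[where x=e]) (use that in simp)
    then show ?thesis using inj that by (meson inj_onD prod.inject)
  qed
  define N :: "'u interp" where "N = \<lparr>dm = \<lambda>s. (\<lambda>e. hh (s, e)) ` {e. (s, e) \<in> D},
     cst = \<lambda>n s. hh (s, cst M n s),
     rd = \<lambda>x y. hh (SElem, rd M (hinv SArr x) (hinv SIdx y)),
     wr = \<lambda>x y z. hh (SArr, wr M (hinv SArr x) (hinv SIdx y) (hinv SElem z)),
     ca = \<lambda>x. hh (SArr, ca M (hinv SElem x))\<rparr>"
  have evN: "(sort_of t, eval M \<mu> t) \<in> D \<and> eval N (\<lambda>v. hh (snd v, \<mu> v)) t = hh (sort_of t, eval M \<mu> t)"
    if mu: "\<forall>v. (snd v, \<mu> v) \<in> D" and w: "wst t" for \<mu> t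
    using w
  proof (induction t rule: trm_induct)
    case (Cst n s)
    then show ?case using DD_base2 unfolding D_def N_def by simp
  next
    case (Var x s)
    then show ?case using mu by (simp add: N_def)
  next
    case (Rd a i)
    then show ?case using DD_rd[of "eval M \<mu> a" M "eval M \<mu> i"] hinv unfolding D_def N_def by auto
  next
    case (Wr a i u)
    then show ?case using DD_wr[of "eval M \<mu> a" M "eval M \<mu> i" "eval M \<mu> u"] hinv unfolding D_def N_def by auto
  next
    case (CA v)
    then show ?case using DD_ca[of "eval M \<mu> v" M] hinv unfolding D_def N_def by auto
  qed
  have satN: "sat N (\<lambda>v. hh (snd v, \<mu> v)) p = sat M \<mu> p"
    if "wf_fm p" "\<forall>v. (snd v, \<mu> v) \<in> D" for p \<mu>
    using that
  proof (induction p arbitrary: \<mu>)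
    case (FEq s t)
    then have "(sort_of s, eval M \<mu> s) \<in> D" "(sort_of t, eval M \<mu> t) \<in> D" "sort_of s = sort_of t"
      "eval N (\<lambda>v. hh (snd v, \<mu> v)) s = hh (sort_of s, eval M \<mu> s)"
      "eval N (\<lambda>v. hh (snd v, \<mu> v)) t = hh (sort_of t, eval M \<mu> t)"
      using evN[of \<mu> s] evN[of \<mu> t] FEq by auto
    then show ?case using inj by (auto dest: inj_onD)
  next
    case (FEx x s p)
    have upd: "(\<lambda>v. hh (snd v, \<mu> v))((x, s) := hh (s, e)) = (\<lambda>v. hh (snd v, (\<mu>((x, s) := e)) v))" for e
      by (rule ext) auto
    have "sat N (\<lambda>v. hh (snd v, \<mu> v)) (FEx x s p) =
        (\<exists>e. (s, e) \<in> D \<and> sat N ((\<lambda>v. hh (snd v, \<mu> v))((x, s) := hh (s, e))) p)"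
      by (auto simp: N_def)
    also have "\<dots> = (\<exists>e. (s, e) \<in> D \<and> sat M (\<mu>((x, s) := e)) p)"
    proof -
      have "sat N ((\<lambda>v. hh (snd v, \<mu> v))((x, s) := hh (s, e))) p = sat M (\<mu>((x, s) := e)) p"
        if "(s, e) \<in> D" for e
        unfolding upd by (rule FEx.IH) (use FEx.prems that in auto)
      then show ?thesis by blast
    qed
    also have "\<dots> = sat M \<mu> (FEx x s p)"
    proof
      assume "\<exists>e. (s, e) \<in> D \<and> sat M (\<mu>((x, s) := e)) p"
      then show "sat M \<mu> (FEx x s p)" using DD_dom[OF I] unfolding D_def by auto
    next
      assume "sat M \<mu> (FEx x s p)"
      then show "\<exists>e. (s, e) \<in> D \<and> sat M (\<mu>((x, s) := e)) p"
        using DD_wit[of \<mu> M x s p] FEx.prems unfolding D_def by auto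
    qed
    finally show ?case .
  next
    case (FNot p) then show ?case by simp
  next
    case (FAnd p q) then show ?case by simp
  next
    case (FOr p q) then show ?case by simp
  next
    case (FImp p q) then show ?case by simp
  qed auto
  have dvN: "dv N = (\<lambda>v. hh (snd v, dv M v))"
  proof
    fix v :: "nat \<times> sort"
    obtain x s where v: "v = (x, s)" by (cases v)
    have "dv N v = (SOME y. y \<in> (\<lambda>e. hh (s, e)) ` {e. (s, e) \<in> D})"
      unfolding v dv_def N_def by simp
    also have "\<dots> = hh (s, nu0 M s)" using img dflt by simp
    finally show "dv N v = hh (snd v, dv M v)" unfolding v dv_nu0 by simp
  qed
  have dvM: "\<forall>v. (snd v, dv M v) \<in> D" unfolding D_def dv_nu0 using DD_base1 by auto
  have isN: "is_interp N"
    unfolding is_interp_def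
  proof (intro conjI allI ballI)
    fix s show "dm N s \<noteq> {}" using DD_base1[of s M] unfolding N_def D_def by auto
  next
    fix n s show "cst N n s \<in> dm N s" using DD_base2[of s M n] unfolding N_def D_def by auto
  next
    fix a i assume "a \<in> dm N SArr" "i \<in> dm N SIdx"
    then show "rd N a i \<in> dm N SElem" using hinv unfolding N_def D_def by (auto simp: image_iff intro!: DD_rd)
  next
    fix a i u assume "a \<in> dm N SArr" "i \<in> dm N SIdx" "u \<in> dm N SElem"
    then show "wr N a i u \<in> dm N SArr" using hinv unfolding N_def D_def by (auto simp: image_iff intro!: DD_wr)
  next
    fix v assume "v \<in> dm N SElem"
    then show "ca N v \<in> dm N SArr" using hinv unfolding N_def D_def by (auto simp: image_iff intro!: DD_ca)
  qed
  have "holds N p = holds M p" if "wf_fm p" for p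
    unfolding holds_dv dvN using satN[OF that dvM] .
  then show ?thesis using isN by blast
qed



definition ev :: "'v interp \<Rightarrow> trm \<Rightarrow> 'v" where
  "ev M t = eval M (dv M) t"

lemma ev_simps[simp]:
  "ev M (Rd a i) = rd M (ev M a) (ev M i)"
  "ev M (Wr a i u) = wr M (ev M a) (ev M i) (ev M u)"
  "ev M (CA v) = ca M (ev M v)"
  "ev M (Cst n s) = cst M n s"
  by (simp_all add: ev_def)

lemma holds_simps[simp]:
  "holds M FTop"
  "holds M (FEq s t) = (ev M s = ev M t)"
  "holds M (FNot p) = (\<not> holds M p)"
  "holds M (FAnd p q) = (holds M p \<and> holds M q)"
  "holds M (FImp p q) = (holds M p \<longrightarrow> holds M q)"
  by (simp_all add: holds_dv ev_def)

lemma ai_is: "array_interp M \<Longrightarrow> is_interp M"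
  by (simp add: array_interp_def)

lemma ev_in: "array_interp M \<Longrightarrow> wst t \<Longrightarrow> sort_of t = s \<Longrightarrow> ev M t \<in> dm M s"
  unfolding ev_def using ev_dom[OF ai_is] by blast

lemma row_ne:
  assumes M: "array_interp M" and w: "wst (Wr a j u)" and d: "d \<in> dm M SIdx" "d \<noteq> ev M j"
  shows "rd M (ev M (Wr a j u)) d = rd M (ev M a) d"
proof -
  have "ev M a \<in> dm M SArr" "ev M j \<in> dm M SIdx" "ev M u \<in> dm M SElem"
    using w ev_in[OF M] by auto
  then show ?thesis using M d unfolding array_interp_def by simp
qed

lemma row_eq:
  assumes M: "array_interp M" and w: "wst (Wr a j u)"
  shows "rd M (ev M (Wr a j u)) (ev M j) = ev M u"
proof -
  have "ev M a \<in> dm M SArr" "ev M j \<in> dm M SIdx" "ev M u \<in> dm M SElem"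
    using w ev_in[OF M] by auto
  then show ?thesis using M unfolding array_interp_def by simp
qed

lemma roc:
  assumes M: "array_interp M" and w: "wst (CA v)" and d: "d \<in> dm M SIdx"
  shows "rd M (ev M (CA v)) d = ev M v"
proof -
  have "ev M v \<in> dm M SElem" using w ev_in[OF M] by auto
  then show ?thesis using M d unfolding array_interp_def by simp
qed

lemma ext_ax:
  assumes M: "array_interp M" and w: "wst a" "sort_of a = SArr" "wst c" "sort_of c = SArr"
    and ne: "ev M a \<noteq> ev M c"
  shows "\<exists>d\<in>dm M SIdx. rd M (ev M a) d \<noteq> rd M (ev M c) d"
proof -
  have "ev M a \<in> dm M SArr" "ev M c \<in> dm M SArr" using w ev_in[OF M] by auto
  then show ?thesis using M ne unfolding array_interp_def by blast
qed

definition entry_ok :: "'v itself \<Rightarrow> trm \<Rightarrow> trm \<Rightarrow> fm \<Rightarrow> trm \<Rightarrow> bool" where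
  "entry_ok X a t r c \<longleftrightarrow> wst a \<and> sort_of a = SArr \<and> wst c \<and> sort_of c = SArr \<and> wf_fm r \<and> wst t \<and>
   ((\<exists>b i. t = Rd b i \<and> (\<forall>M::'v interp. array_interp M \<longrightarrow> holds M r \<longrightarrow>
          rd M (ev M a) (ev M i) = rd M (ev M c) (ev M i)))
  \<or> (\<exists>v. t = CA v \<and> (a \<noteq> t \<longrightarrow> ((r = FTop \<and> (\<exists>j u. c = Wr a j u \<or> a = Wr c j u))
          \<or> (\<forall>M::'v interp. array_interp M \<longrightarrow> holds M r \<longrightarrow> ev M a = ev M c)))))"

definition inv_pi :: "'v itself \<Rightarrow> pimap \<Rightarrow> bool" where
  "inv_pi X \<pi> \<longleftrightarrow> (\<forall>a t r c. \<pi> (a, t) = Some (r, c) \<longrightarrow> entry_ok X a t r c)"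

lemma inv_pi0: "inv_pi X pi0"
  by (simp add: inv_pi_def pi0_def)

lemma inv_pi_upd: "inv_pi X \<pi> \<Longrightarrow> entry_ok X a t r c \<Longrightarrow> inv_pi X (\<pi>((a, t) := Some (r, c)))"
  unfolding inv_pi_def by auto

lemma key_ok: "inv_pi X \<pi> \<Longrightarrow> \<pi> (a, t) \<noteq> None \<Longrightarrow>
   wst a \<and> sort_of a = SArr \<and> wst t \<and> ((\<exists>b i. t = Rd b i) \<or> (\<exists>v. t = CA v))"
  unfolding inv_pi_def entry_ok_def by fastforce

lemma entry_rd:
  assumes "wst a" "sort_of a = SArr" "wst c" "sort_of c = SArr" "wf_fm r" "wst (Rd b i)"
    "\<And>M::'v interp. array_interp M \<Longrightarrow> holds M r \<Longrightarrow> rd M (ev M a) (ev M i) = rd M (ev M c) (ev M i)"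
  shows "entry_ok (X::'v itself) a (Rd b i) r c"
  unfolding entry_ok_def using assms by blast

lemma entry_ca:
  assumes "wst a" "sort_of a = SArr" "wst c" "sort_of c = SArr" "wf_fm r" "wst (CA v)"
    "(r = FTop \<and> (\<exists>j u. c = Wr a j u \<or> a = Wr c j u))
          \<or> (\<forall>M::'v interp. array_interp M \<longrightarrow> holds M r \<longrightarrow> ev M a = ev M c)"
  shows "entry_ok (X::'v itself) a (CA v) r c"
  unfolding entry_ok_def using assms by blast

lemma reason_wf: "reason \<pi> a t r \<Longrightarrow> inv_pi X \<pi> \<Longrightarrow> wf_fm r"
proof (induction rule: reason.induct)
  case (rbase a t)
  then show ?case by simp
next
  case (rstep a t r c p)
  then show ?case unfolding inv_pi_def entry_ok_def by auto
qed

lemma reason_rd: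
  assumes "reason \<pi> a t r" "inv_pi TYPE('v) \<pi>" "t = Rd b i" "array_interp (M::'v interp)" "holds M r"
  shows "rd M (ev M a) (ev M i) = rd M (ev M b) (ev M i)"
  using assms
proof (induction arbitrary: b i rule: reason.induct)
  case (rbase a t)
  then have "sort_of a = SArr" using key_ok by blast
  then show ?case using rbase by auto
next
  case (rstep a t r c p)
  have "entry_ok TYPE('v) a t r c" using rstep unfolding inv_pi_def by blast
  then have "rd M (ev M a) (ev M i) = rd M (ev M c) (ev M i)"
    using rstep unfolding entry_ok_def by auto
  also have "\<dots> = rd M (ev M b) (ev M i)" using rstep by auto
  finally show ?case .
qed

lemma updidx_wst: "updidx \<pi> a t K \<Longrightarrow> inv_pi X \<pi> \<Longrightarrow> \<forall>k\<in>K. wst k \<and> sort_of k = SIdx"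
proof (induction rule: updidx.induct)
  case (ubase a t)
  then show ?case by simp
next
  case (uwr a t b j K)
  have e: "entry_ok X a t FTop b" using uwr unfolding inv_pi_def by blast
  from uwr(3) obtain u where "b = Wr a j u \<or> a = Wr b j u" by blast
  then have "wst j \<and> sort_of j = SIdx" using e unfolding entry_ok_def by auto
  then show ?case using uwr by auto
next
  case (uoth a t r c K)
  then show ?case by simp
qed

lemma updidx_ca:
  assumes "updidx \<pi> a t K" "inv_pi TYPE('v) \<pi>" "t = CA v" "reason \<pi> a t r" "array_interp (M::'v interp)"
    "holds M r" "d \<in> dm M SIdx" "\<forall>k\<in>K. d \<noteq> ev M k"
  shows "rd M (ev M a) d = ev M v"
  using assms
proof (induction arbitrary: r rule: updidx.induct)
  case (ubase a t)
  have "wst a" using key_ok ubase by blast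
  then show ?case using roc[of M v d] ubase by auto
next
  case (uwr a t b j K)
  from uwr.prems(3) obtain p where p: "reason \<pi> b t p" "r = FAnd p FTop"
    by (cases rule: reason.cases) (use uwr in auto)
  have IH: "rd M (ev M b) d = ev M v" using uwr p by auto
  have e: "entry_ok TYPE('v) a t FTop b" using uwr unfolding inv_pi_def by blast
  have dj: "d \<noteq> ev M j" using uwr by auto
  from uwr.hyps(3) obtain u where "b = Wr a j u \<or> a = Wr b j u" by blast
  then show ?case
  proof
    assume b: "b = Wr a j u"
    have "rd M (ev M b) d = rd M (ev M a) d" unfolding b
      by (rule row_ne[OF uwr.prems(4)]) (use e b uwr dj in \<open>auto simp: entry_ok_def\<close>)
    then show ?thesis using IH by simp
  next
    assume a: "a = Wr b j u"
    have "rd M (ev M a) d = rd M (ev M b) d" unfolding a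
      by (rule row_ne[OF uwr.prems(4)]) (use e a uwr dj in \<open>auto simp: entry_ok_def\<close>)
    then show ?thesis using IH by simp
  qed
next
  case (uoth a t r0 c K)
  from uoth.prems(3) obtain p where p: "reason \<pi> c t p" "r = FAnd p r0"
    by (cases rule: reason.cases) (use uoth in auto)
  have IH: "rd M (ev M c) d = ev M v" using uoth p by auto
  have e: "entry_ok TYPE('v) a t r0 c" using uoth unfolding inv_pi_def by blast
  have "ev M a = ev M c" using e uoth p unfolding entry_ok_def by auto
  then show ?case using IH by simp
qed



lemma conjs_sat: "sat M \<mu> (conjs ps) = (\<forall>p\<in>set ps. sat M \<mu> p)"
  by (induction ps) (auto simp: conjs_def)

lemma conjs_wf: "(\<forall>p\<in>set ps. wf_fm p) \<Longrightarrow> wf_fm (conjs ps)"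
  by (induction ps) (auto simp: conjs_def)

definition Inv :: "'v itself \<Rightarrow> 'u cfg \<Rightarrow> bool" where
  "Inv X c = (case c of Unsat \<Rightarrow> False | Cfg A I \<pi> \<Rightarrow> (\<forall>p\<in>A. wf_fm p) \<and>
      (\<exists>M::'v interp. array_interp M \<and> (\<forall>p\<in>A. holds M p)) \<and> inv_pi X \<pi>)"

lemma Inv_Unsat[simp]: "Inv X Unsat = False"
  by (simp add: Inv_def)

lemma Inv_Cfg: "Inv (X::'v itself) (Cfg A I \<pi>) = ((\<forall>p\<in>A. wf_fm p) \<and>
      (\<exists>M::'v interp. array_interp M \<and> (\<forall>p\<in>A. holds M p)) \<and> inv_pi X \<pi>)"
  by (simp add: Inv_def)

lemma Inv_add:
  assumes "add_fm A p A'" "\<forall>q\<in>A. wf_fm q" "wf_fm p" "array_interp (M::'v interp)"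
    "\<forall>q\<in>A. holds M q" "holds M p"
  shows "Inv TYPE('v) (Cfg A' I pi0)"
  using add_fm_sound[OF assms] inv_pi0 unfolding Inv_Cfg by blast

lemma W_ok:
  assumes wfA: "\<forall>p\<in>A. wf_fm p" and M: "array_interp (M::'v interp)" and q: "q \<in> W A"
  shows "wf_fm q \<and> holds M q"
proof -
  from q obtain a i u where q: "q = FEq (Rd (Wr a i u) i) u" "Wr a i u \<in> T A" unfolding W_def by blast
  have w: "wst (Wr a i u)" using wfA_T[OF wfA q(2)] .
  then show ?thesis using q row_eq[OF M w] by simp
qed

lemma step_Inv:
  assumes st: "step c c'" and inv: "Inv (TYPE('v)) c" and inf: "infinite (UNIV :: 'u set)"
  shows "Inv TYPE('v) (c' :: 'u cfg)"
proof -
  have wfT: "wst u" if "c = Cfg A I \<pi>" "u \<in> T A" for A I \<pi> u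
  proof -
    have "\<forall>p\<in>A. wf_fm p" using inv that by (simp add: Inv_Cfg)
    then show ?thesis using wfA_T that(2) by blast
  qed
  show ?thesis
  using st
proof cases
  case (Interp J A \<pi>)
  then show ?thesis using inv by (simp add: Inv_Cfg)
next
  case (Conf A I \<pi>)
  from inv Conf obtain M :: "'v interp" where wfA: "\<forall>p\<in>A. wf_fm p" and M: "array_interp M"
    "\<forall>p\<in>A. holds M p" by (auto simp: Inv_Cfg)
  obtain N :: "'u interp" where N: "is_interp N" "\<And>p. wf_fm p \<Longrightarrow> holds N p = holds M p"
    using LS[OF ai_is[OF M(1)] inf] by blast
  have "models N (A \<union> W A)"
    unfolding models_def using N W_ok[OF wfA M(1)] wfA M(2) by auto
  then show ?thesis using Conf by blast
next
  case (InitR a i A I \<pi>)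
  then have w: "wst (Rd a i)" using wfT by blast
  have "entry_ok TYPE('v) a (Rd a i) FTop a" by (rule entry_rd) (use w in auto)
  then show ?thesis using inv InitR by (auto simp: Inv_Cfg intro: inv_pi_upd)
next
  case (InitW a i u A I \<pi>)
  then have w: "wst (Wr a i u)" using wfT by blast
  have "entry_ok TYPE('v) (Wr a i u) (Rd (Wr a i u) i) FTop (Wr a i u)" by (rule entry_rd) (use w in auto)
  then show ?thesis using inv InitW by (auto simp: Inv_Cfg intro: inv_pi_upd)
next
  case (RowD J i j \<pi> a u b A)
  have ip: "inv_pi TYPE('v) \<pi>" using inv RowD by (simp add: Inv_Cfg)
  have k: "wst (Wr a j u)" "wst (Rd b i)" using key_ok[OF ip RowD(4)] by auto
  have "entry_ok TYPE('v) a (Rd b i) (FNot (FEq i j)) (Wr a j u)"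
  proof (rule entry_rd)
    fix M :: "'v interp" assume M: "array_interp M" "holds M (FNot (FEq i j))"
    have "ev M i \<in> dm M SIdx" using ev_in[OF M(1)] k by auto
    then show "rd M (ev M a) (ev M i) = rd M (ev M (Wr a j u)) (ev M i)"
      using row_ne[OF M(1) k(1)] M(2) by simp
  qed (use k in auto)
  then show ?thesis using inv RowD by (auto simp: Inv_Cfg intro: inv_pi_upd)
next
  case (RowU J i j a u A \<pi> b)
  have ip: "inv_pi TYPE('v) \<pi>" using inv RowU by (simp add: Inv_Cfg)
  have k: "wst (Rd b i)" using key_ok[OF ip RowU(5)] by auto
  have w: "wst (Wr a j u)" using RowU wfT by blast
  have "entry_ok TYPE('v) (Wr a j u) (Rd b i) (FNot (FEq i j)) a"
  proof (rule entry_rd)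
    fix M :: "'v interp" assume M: "array_interp M" "holds M (FNot (FEq i j))"
    have "ev M i \<in> dm M SIdx" using ev_in[OF M(1)] k by auto
    then show "rd M (ev M (Wr a j u)) (ev M i) = rd M (ev M a) (ev M i)"
      using row_ne[OF M(1) w] M(2) by simp
  qed (use k w in auto)
  then show ?thesis using inv RowU by (auto simp: Inv_Cfg intro: inv_pi_upd)
next
  case (EqR J a c A \<pi> b i)
  have ip: "inv_pi TYPE('v) \<pi>" using inv EqR by (simp add: Inv_Cfg)
  have k: "wst (Rd b i)" using key_ok[OF ip EqR(7)] by auto
  have w: "wst a" "sort_of a = SArr" "wst c" "sort_of c = SArr"
    using EqR wfT unfolding TA_def by auto
  have "entry_ok TYPE('v) c (Rd b i) (FEq a c) a"
    by (rule entry_rd) (use k w in auto)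
  then show ?thesis using inv EqR by (auto simp: Inv_Cfg intro: inv_pi_upd)
next
  case (EqL J a c A \<pi> b i)
  have ip: "inv_pi TYPE('v) \<pi>" using inv EqL by (simp add: Inv_Cfg)
  have k: "wst (Rd b i)" using key_ok[OF ip EqL(7)] by auto
  have w: "wst a" "sort_of a = SArr" "wst c" "sort_of c = SArr"
    using EqL wfT unfolding TA_def by auto
  have "entry_ok TYPE('v) a (Rd b i) (FEq a c) c"
    by (rule entry_rd) (use k w in auto)
  then show ?thesis using inv EqL by (auto simp: Inv_Cfg intro: inv_pi_upd)
next
  case (CongR J i k \<pi> a b c r1 r2 A A')
  from inv CongR obtain M :: "'v interp" where wfA: "\<forall>p\<in>A. wf_fm p" and M: "array_interp M"
    "\<forall>p\<in>A. holds M p" and ip: "inv_pi TYPE('v) \<pi>" by (auto simp: Inv_Cfg)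
  have k1: "wst (Rd b i)" using key_ok[OF ip CongR(4)] by auto
  have k2: "wst (Rd c k)" using key_ok[OF ip CongR(5)] by auto
  have wf: "wf_fm (FImp (FAnd r1 (FAnd r2 (FEq i k))) (FEq (Rd b i) (Rd c k)))"
    using reason_wf[OF CongR(7) ip] reason_wf[OF CongR(8) ip] k1 k2 by auto
  have h: "holds M (FImp (FAnd r1 (FAnd r2 (FEq i k))) (FEq (Rd b i) (Rd c k)))"
    using reason_rd[OF CongR(7) ip _ M(1)] reason_rd[OF CongR(8) ip _ M(1)] by auto
  show ?thesis using Inv_add[OF CongR(9) wfA wf M h] CongR by simp
next
  case (DisEq J a c A A' \<pi>)
  from inv DisEq obtain M :: "'v interp" where wfA: "\<forall>p\<in>A. wf_fm p" and M: "array_interp M"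
    "\<forall>p\<in>A. holds M p" by (auto simp: Inv_Cfg)
  have w: "wst a" "sort_of a = SArr" "wst c" "sort_of c = SArr"
    using DisEq wfA_T[OF wfA] unfolding TA_def by auto
  define k where "k = Cst (Kc a c) SIdx"
  define dd where "dd = (if \<exists>d\<in>dm M SIdx. rd M (ev M a) d \<noteq> rd M (ev M c) d
      then SOME d. d \<in> dm M SIdx \<and> rd M (ev M a) d \<noteq> rd M (ev M c) d else cst M (Kc a c) SIdx)"
  have dd: "dd \<in> dm M SIdx"
  proof (cases "\<exists>d\<in>dm M SIdx. rd M (ev M a) d \<noteq> rd M (ev M c) d")
    case True
    then have "\<exists>d. d \<in> dm M SIdx \<and> rd M (ev M a) d \<noteq> rd M (ev M c) d" by blast
    from someI_ex[OF this] show ?thesis using True unfolding dd_def by simp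
  next
    case False
    then have "dd = cst M (Kc a c) SIdx" unfolding dd_def by simp
    then show ?thesis using ai_is[OF M(1)] unfolding is_interp_def by simp
  qed
  define M1 where "M1 = upd_cst M (Kc a c) SIdx dd"
  have M1: "array_interp M1" unfolding M1_def by (rule array_interp_upd[OF M(1) dd])
  have nk: "\<And>q. q \<in> A \<Longrightarrow> Cst (Kc a c) SIdx \<notin> fterms q" using DisEq unfolding T_def by blast
  have hA: "\<forall>q\<in>A. holds M1 q"
  proof
    fix q assume q: "q \<in> A"
    have "holds M1 q = holds M q" unfolding M1_def by (rule holds_upd[OF nk[OF q]])
    then show "holds M1 q" using M(2) q by simp
  qed
  have aT: "a \<in> T A" "c \<in> T A" using DisEq unfolding TA_def by auto
  have "Cst (Kc a c) SIdx \<notin> subt a" "Cst (Kc a c) SIdx \<notin> subt c"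
    using T_subt[OF aT(1)] T_subt[OF aT(2)] DisEq by auto
  then have eva: "ev M1 a = ev M a" "ev M1 c = ev M c"
    unfolding M1_def ev_def using eval_upd by auto
  have evk: "ev M1 k = dd" unfolding k_def M1_def by simp
  define P where "P = FImp (FNot (FEq a c)) (FNot (FEq (Rd a k) (Rd c k)))"
  have wf: "wf_fm P" unfolding P_def k_def using w by auto
  have h: "holds M1 P"
  proof -
    have "rd M (ev M a) dd \<noteq> rd M (ev M c) dd" if "ev M a \<noteq> ev M c"
    proof -
      have ex: "\<exists>d\<in>dm M SIdx. rd M (ev M a) d \<noteq> rd M (ev M c) d" using ext_ax[OF M(1) w that] .
      then have "dd = (SOME d. d \<in> dm M SIdx \<and> rd M (ev M a) d \<noteq> rd M (ev M c) d)"
        unfolding dd_def by simp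
      then show ?thesis using ex by (metis (mono_tags, lifting) someI_ex)
    qed
    then show ?thesis unfolding P_def using eva evk by (simp add: M1_def)
  qed
  show ?thesis using Inv_add[OF _ wfA wf M1 hA h] DisEq unfolding P_def k_def by simp
next
  case (Roc \<pi> v b i J r A A')
  from inv Roc obtain M :: "'v interp" where wfA: "\<forall>p\<in>A. wf_fm p" and M: "array_interp M"
    "\<forall>p\<in>A. holds M p" and ip: "inv_pi TYPE('v) \<pi>" by (auto simp: Inv_Cfg)
  have k: "wst (CA v)" "wst (Rd b i)" using key_ok[OF ip Roc(3)] by auto
  have wf: "wf_fm (FImp r (FEq (Rd b i) v))" using reason_wf[OF Roc(5) ip] k by auto
  have h: "holds M (FImp r (FEq (Rd b i) v))"
  proof -
    have "ev M i \<in> dm M SIdx" using ev_in[OF M(1)] k by auto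
    then show ?thesis using reason_rd[OF Roc(5) ip _ M(1)] roc[OF M(1) k(1)] by auto
  qed
  show ?thesis using Inv_add[OF Roc(6) wfA wf M h] Roc by simp
next
  case (InitC v A I \<pi>)
  then have w: "wst (CA v)" using wfT by blast
  have "entry_ok TYPE('v) (CA v) (CA v) FTop (CA v)" unfolding entry_ok_def using w by auto
  then show ?thesis using inv InitC by (auto simp: Inv_Cfg intro: inv_pi_upd)
next
  case (CowD \<pi> a j u v K J A)
  have ip: "inv_pi TYPE('v) \<pi>" using inv CowD by (simp add: Inv_Cfg)
  have k: "wst (Wr a j u)" "wst (CA v)" using key_ok[OF ip CowD(3)] by auto
  have "entry_ok TYPE('v) a (CA v) FTop (Wr a j u)" by (rule entry_ca) (use k in auto)
  then show ?thesis using inv CowD by (auto simp: Inv_Cfg intro: inv_pi_upd)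
next
  case (CowU \<pi> a v j u A K J)
  have ip: "inv_pi TYPE('v) \<pi>" using inv CowU by (simp add: Inv_Cfg)
  have k: "wst a" "sort_of a = SArr" "wst (CA v)" using key_ok[OF ip CowU(3)] by auto
  have w: "wst (Wr a j u)" using CowU wfT by blast
  have "entry_ok TYPE('v) (Wr a j u) (CA v) FTop a" by (rule entry_ca) (use k w in auto)
  then show ?thesis using inv CowU by (auto simp: Inv_Cfg intro: inv_pi_upd)
next
  case (CEqR J a c A \<pi> v)
  have ip: "inv_pi TYPE('v) \<pi>" using inv CEqR by (simp add: Inv_Cfg)
  have k: "wst (CA v)" using key_ok[OF ip CEqR(7)] by auto
  have w: "wst a" "sort_of a = SArr" "wst c" "sort_of c = SArr"
    using CEqR wfT unfolding TA_def by auto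
  have "entry_ok TYPE('v) c (CA v) (FEq a c) a"
    by (rule entry_ca) (use k w in auto)
  then show ?thesis using inv CEqR by (auto simp: Inv_Cfg intro: inv_pi_upd)
next
  case (CEqL J a c A \<pi> v)
  have ip: "inv_pi TYPE('v) \<pi>" using inv CEqL by (simp add: Inv_Cfg)
  have k: "wst (CA v)" using key_ok[OF ip CEqL(7)] by auto
  have w: "wst a" "sort_of a = SArr" "wst c" "sort_of c = SArr"
    using CEqL wfT unfolding TA_def by auto
  have "entry_ok TYPE('v) a (CA v) (FEq a c) c"
    by (rule entry_ca) (use k w in auto)
  then show ?thesis using inv CEqL by (auto simp: Inv_Cfg intro: inv_pi_upd)
next
  case (CongC \<pi> a v w J K1 K2 r1 r2 ks x A A')
  from inv CongC obtain M :: "'v interp" where wfA: "\<forall>p\<in>A. wf_fm p" and M: "array_interp M"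
    "\<forall>p\<in>A. holds M p" and ip: "inv_pi TYPE('v) \<pi>" by (auto simp: Inv_Cfg)
  have kv: "wst (CA v)" using key_ok[OF ip CongC(3)] by auto
  have kw: "wst (CA w)" using key_ok[OF ip CongC(4)] by auto
  have ks: "\<forall>k\<in>set ks. wst k \<and> sort_of k = SIdx"
    using updidx_wst[OF CongC(6) ip] updidx_wst[OF CongC(7) ip] CongC(11) by auto
  define Q where "Q = FEx x SIdx (conjs (map (\<lambda>k. FNot (FEq (Var x SIdx) k)) ks))"
  define P where "P = FImp (FAnd r1 (FAnd r2 Q)) (FEq v w)"
  have wf: "wf_fm P" unfolding P_def Q_def
    using reason_wf[OF CongC(9) ip] reason_wf[OF CongC(10) ip] kv kw ks by (auto intro!: conjs_wf)
  have h: "holds M P"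
  proof -
    have "ev M v = ev M w" if h1: "holds M r1" and h2: "holds M r2" and hq: "holds M Q"
    proof -
      from hq obtain d where d: "d \<in> dm M SIdx"
        and s: "\<forall>k\<in>set ks. d \<noteq> eval M ((dv M)((x, SIdx) := d)) k"
        unfolding Q_def holds_dv by (auto simp: conjs_sat)
      have "eval M ((dv M)((x, SIdx) := d)) k = ev M k" if "k \<in> set ks" for k
        unfolding ev_def by (rule eval_agree) (use CongC(12) that in auto)
      then have dk: "\<forall>k\<in>K1 \<union> K2. d \<noteq> ev M k" using s CongC(11) by auto
      have "rd M (ev M a) d = ev M v"
        by (rule updidx_ca[OF CongC(6) ip refl CongC(9) M(1) h1 d]) (use dk in auto)
      moreover have "rd M (ev M a) d = ev M w"
        by (rule updidx_ca[OF CongC(7) ip refl CongC(10) M(1) h2 d]) (use dk in auto)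
      ultimately show ?thesis by simp
    qed
    then show ?thesis unfolding P_def by auto
  qed
  show ?thesis using Inv_add[OF _ wfA wf M h] CongC unfolding P_def Q_def by simp
qed

qed


lemma Inv_star:
  assumes "(step :: 'u cfg \<Rightarrow> 'u cfg \<Rightarrow> bool)\<^sup>*\<^sup>* c c'" "Inv TYPE('v) c"
    "infinite (UNIV :: 'u set)"
  shows "Inv TYPE('v) c'"
  using assms(1,2)
proof (induction rule: rtranclp_induct)
  case base
  then show ?case .
next
  case (step y z)
  then show ?case using step_Inv[of y z] assms(3) by blast
qed

theorem mainTheorem1:
  fixes A :: "fm set"
  assumes "infinite (UNIV :: 'u set)"
    and "finite A"
    and "\<forall>p\<in>A. wf_fm p \<and> closed p \<and> flat_fm p"
    and "(step :: 'u cfg \<Rightarrow> 'u cfg \<Rightarrow> bool)\<^sup>*\<^sup>* (init_cfg A) Unsat"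
  shows "\<not> (\<exists>I :: 'v interp. array_interp I \<and> (\<forall>p\<in>A. holds I p))"
proof
  assume "\<exists>I :: 'v interp. array_interp I \<and> (\<forall>p\<in>A. holds I p)"
  then have "Inv TYPE('v) (init_cfg A :: 'u cfg)"
    using assms(3) inv_pi0 by (auto simp: init_cfg_def Inv_Cfg)
  then have "Inv TYPE('v) (Unsat :: 'u cfg)" using Inv_star[OF assms(4) _ assms(1)] by blast
  then show False by simp
qed

end
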